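(* For all $(f_1,f_2)\in L^2(\mathbb{T}^3\times\mathbb{R}^3)^2$, \[ \langle L(f_1,f_2),(f_1,f_2)\rangle_{L^2_{x,v}}\le-(n_{10}+n_{20})\Big(\max\{\delta,\omega\}\|(I-P_1,I-P_2)(f_1,f_2)\|^2_{L^2_{x,v}}+\min\{1-\delta,1-\omega\}\|(I-P)(f_1,f_2)\|^2_{L^2_{x,v}}\Big). \]
   Context: $m_1\ge m_2>0$, $n_{10},n_{20}>0$, $0\le\delta<1$, $0\le\omega<1$. $\mu_k(v)=n_{k0}(\frac{m_k}{2\pi})^{3/2}e^{-m_k|v|^2/2}$. Orthonormal functions in $L^2(\mathbb{R}^3_v)$: $e_{k1}=\frac{\sqrt{\mu_k}}{\sqrt{n_{k0}}}$, $e_{ki}=\sqrt{\frac{m_k}{n_{k0}}}v_{i-1}\sqrt{\mu_k}$ ($i=2,3,4$), $e_{k5}=\frac{m_k|v|^2-3}{\sqrt{6n_{k0}}}\sqrt{\mu_k}$; $P_kf=\sum_{i=1}^5\langle f,e_{ki}\rangle_{L^2_v}e_{ki}$ (applied pointwise in $x$), and $(I-P_1,I-P_2)(f_1,f_2)=(f_1-P_1f_1,f_2-P_2f_2)$. $L_{kk}(f_k)=n_{k0}(P_kf_k-f_k)$; $L_{12}(f_1,f_2)=n_{20}(P_1f_1-f_1)+n_{20}\big[(1-\delta)\sum_{i=2}^4(\sqrt{\frac{n_{10}}{n_{20}}}\sqrt{\frac{m_1}{m_2}}\langle f_2,e_{2i}\rangle_{L^2_v}-\langle f_1,e_{1i}\rangle_{L^2_v})e_{1i}+(1-\omega)(\sqrt{\frac{n_{10}}{n_{20}}}\langle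 f_2,e_{25}\rangle_{L^2_v}-\langle f_1,e_{15}\rangle_{L^2_v})e_{15}\big]$; $L_{21}(f_1,f_2)=n_{10}(P_2f_2-f_2)+n_{10}\big[\frac{m_1}{m_2}(1-\delta)\sum_{i=2}^4(\sqrt{\frac{n_{20}}{n_{10}}}\sqrt{\frac{m_2}{m_1}}\langle f_1,e_{1i}\rangle_{L^2_v}-\langle f_2,e_{2i}\rangle_{L^2_v})e_{2i}+(1-\omega)(\sqrt{\frac{n_{20}}{n_{10}}}\langle f_1,e_{15}\rangle_{L^2_v}-\langle f_2,e_{25}\rangle_{L^2_v})e_{25}\big]$; $L(f_1,f_2)=(L_{11}(f_1)+L_{12}(f_1,f_2),\,L_{22}(f_2)+L_{21}(f_1,f_2))$. $P$ is the orthogonal projection in $L^2(\mathbb{R}^3_v)^2$ (applied pointwise in $x$) onto the span of $(\sqrt{\mu_1},0)$, $(0,\sqrt{\mu_2})$, $(m_1v_j\sqrt{\mu_1},m_2v_j\sqrt{\mu_2})$ ($j=1,2,3$), $((m_1|v|^2-3)\sqrt{\mu_1},(m_2|v|^2-3)\sqrt{\mu_2})$. Inner product $\langle(f_1,f_2),(g_1,g_2)\rangle_{L^2_{x,v}}=\int_{\mathbb{T}^3\times\mathbb{R}^3}(f_1g_1+f_2g_2)dvdx$ and associated norm $\|\cdot\|_{L^2_{x,v}}$. *)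

theory Defs
  imports "HOL-Analysis.Analysis"
begin

text \<open>Velocities v are in real^3; the torus T^3 is represented by the unit cube
  (periodic fundamental domain); a function on T^3 x R^3 is a function on real^3 x real^3
  of which only the values on the cube x R^3 matter.\<close>

definition torus_dom :: "((real^3) \<times> (real^3)) set" where
  "torus_dom = {x. \<forall>i. 0 \<le> x $ i \<and> x $ i \<le> 1} \<times> UNIV"

definition Mw :: "real \<Rightarrow> real \<Rightarrow> real^3 \<Rightarrow> real" where
  "Mw m n v = n * (m / (2 * pi)) powr (3/2) * exp (- m * (norm v)\<^sup>2 / 2)"

definition e1 :: "real \<Rightarrow> real \<Rightarrow> real^3 \<Rightarrow> real" where
  "e1 m n v = sqrt (Mw m n v) / sqrt n"

text \<open>emom m n j corresponds to e_{k,j+1} (j = 1,2,3).\<close>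
definition emom :: "real \<Rightarrow> real \<Rightarrow> 3 \<Rightarrow> real^3 \<Rightarrow> real" where
  "emom m n j v = sqrt (m / n) * v $ j * sqrt (Mw m n v)"

definition e5 :: "real \<Rightarrow> real \<Rightarrow> real^3 \<Rightarrow> real" where
  "e5 m n v = (m * (norm v)\<^sup>2 - 3) / sqrt (6 * n) * sqrt (Mw m n v)"

definition vinner :: "(real^3 \<Rightarrow> real) \<Rightarrow> (real^3 \<Rightarrow> real) \<Rightarrow> real" where
  "vinner f g = (LINT v|lborel. f v * g v)"

definition Pk :: "real \<Rightarrow> real \<Rightarrow> (real^3 \<Rightarrow> real) \<Rightarrow> real^3 \<Rightarrow> real" where
  "Pk m n f v = vinner f (e1 m n) * e1 m n v
     + (\<Sum>j\<in>UNIV. vinner f (emom m n j) * emom m n j v)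
     + vinner f (e5 m n) * e5 m n v"

definition L11 :: "real \<Rightarrow> real \<Rightarrow> (real^3 \<Rightarrow> real) \<Rightarrow> real^3 \<Rightarrow> real" where
  "L11 m1 n10 f1 v = n10 * (Pk m1 n10 f1 v - f1 v)"

definition L22 :: "real \<Rightarrow> real \<Rightarrow> (real^3 \<Rightarrow> real) \<Rightarrow> real^3 \<Rightarrow> real" where
  "L22 m2 n20 f2 v = n20 * (Pk m2 n20 f2 v - f2 v)"

definition L12 :: "real \<Rightarrow> real \<Rightarrow> real \<Rightarrow> real \<Rightarrow> real \<Rightarrow> real \<Rightarrow>
    (real^3 \<Rightarrow> real) \<Rightarrow> (real^3 \<Rightarrow> real) \<Rightarrow> real^3 \<Rightarrow> real" where
  "L12 m1 m2 n10 n20 \<delta> \<omega> f1 f2 v =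
     n20 * (Pk m1 n10 f1 v - f1 v)
   + n20 * ((1 - \<delta>) * (\<Sum>j\<in>UNIV.
        (sqrt (n10 / n20) * sqrt (m1 / m2) * vinner f2 (emom m2 n20 j)
          - vinner f1 (emom m1 n10 j)) * emom m1 n10 j v)
     + (1 - \<omega>) * (sqrt (n10 / n20) * vinner f2 (e5 m2 n20) - vinner f1 (e5 m1 n10))
         * e5 m1 n10 v)"

definition L21 :: "real \<Rightarrow> real \<Rightarrow> real \<Rightarrow> real \<Rightarrow> real \<Rightarrow> real \<Rightarrow>
    (real^3 \<Rightarrow> real) \<Rightarrow> (real^3 \<Rightarrow> real) \<Rightarrow> real^3 \<Rightarrow> real" where
  "L21 m1 m2 n10 n20 \<delta> \<omega> f1 f2 v =
     n10 * (Pk m2 n20 f2 v - f2 v)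
   + n10 * (m1 / m2 * (1 - \<delta>) * (\<Sum>j\<in>UNIV.
        (sqrt (n20 / n10) * sqrt (m2 / m1) * vinner f1 (emom m1 n10 j)
          - vinner f2 (emom m2 n20 j)) * emom m2 n20 j v)
     + (1 - \<omega>) * (sqrt (n20 / n10) * vinner f1 (e5 m1 n10) - vinner f2 (e5 m2 n20))
         * e5 m2 n20 v)"

definition Lop :: "real \<Rightarrow> real \<Rightarrow> real \<Rightarrow> real \<Rightarrow> real \<Rightarrow> real \<Rightarrow>
    (real^3 \<Rightarrow> real) \<Rightarrow> (real^3 \<Rightarrow> real) \<Rightarrow> (real^3 \<Rightarrow> real) \<times> (real^3 \<Rightarrow> real)" where
  "Lop m1 m2 n10 n20 \<delta> \<omega> f1 f2 =
     ((\<lambda>v. L11 m1 n10 f1 v + L12 m1 m2 n10 n20 \<delta> \<omega> f1 f2 v),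
      (\<lambda>v. L22 m2 n20 f2 v + L21 m1 m2 n10 n20 \<delta> \<omega> f1 f2 v))"

definition Bvec :: "real \<Rightarrow> real \<Rightarrow> real \<Rightarrow> real \<Rightarrow> nat \<Rightarrow>
    (real^3 \<Rightarrow> real) \<times> (real^3 \<Rightarrow> real)" where
  "Bvec m1 m2 n10 n20 i =
    (if i = 0 then (\<lambda>v. sqrt (Mw m1 n10 v), \<lambda>v. 0)
     else if i = 1 then (\<lambda>v. 0, \<lambda>v. sqrt (Mw m2 n20 v))
     else if i = 2 then (\<lambda>v. m1 * v $ 1 * sqrt (Mw m1 n10 v), \<lambda>v. m2 * v $ 1 * sqrt (Mw m2 n20 v))
     else if i = 3 then (\<lambda>v. m1 * v $ 2 * sqrt (Mw m1 n10 v), \<lambda>v. m2 * v $ 2 * sqrt (Mw m2 n20 v))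
     else if i = 4 then (\<lambda>v. m1 * v $ 3 * sqrt (Mw m1 n10 v), \<lambda>v. m2 * v $ 3 * sqrt (Mw m2 n20 v))
     else (\<lambda>v. (m1 * (norm v)\<^sup>2 - 3) * sqrt (Mw m1 n10 v),
           \<lambda>v. (m2 * (norm v)\<^sup>2 - 3) * sqrt (Mw m2 n20 v)))"

definition vinner2 :: "(real^3 \<Rightarrow> real) \<times> (real^3 \<Rightarrow> real) \<Rightarrow>
    (real^3 \<Rightarrow> real) \<times> (real^3 \<Rightarrow> real) \<Rightarrow> real" where
  "vinner2 f g = vinner (fst f) (fst g) + vinner (snd f) (snd g)"

definition Pbig :: "real \<Rightarrow> real \<Rightarrow> real \<Rightarrow> real \<Rightarrow>
    (real^3 \<Rightarrow> real) \<times> (real^3 \<Rightarrow> real) \<Rightarrow> (real^3 \<Rightarrow> real) \<times> (real^3 \<Rightarrow> real)" where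
  "Pbig m1 m2 n10 n20 f = (THE g.
     (\<exists>c :: nat \<Rightarrow> real. g = ((\<lambda>v. \<Sum>i<6. c i * fst (Bvec m1 m2 n10 n20 i) v),
                               (\<lambda>v. \<Sum>i<6. c i * snd (Bvec m1 m2 n10 n20 i) v)))
     \<and> (\<forall>i<6. vinner2 ((\<lambda>v. fst f v - fst g v), (\<lambda>v. snd f v - snd g v))
                        (Bvec m1 m2 n10 n20 i) = 0))"

definition L2_tv :: "((real^3) \<times> (real^3) \<Rightarrow> real) \<Rightarrow> bool" where
  "L2_tv f \<longleftrightarrow> set_borel_measurable lborel torus_dom f
      \<and> set_integrable lborel torus_dom (\<lambda>z. (f z)\<^sup>2)"

end

theory Submission
  imports Defs "HOL-Probability.Probability"
begin

lemma prod3_hbi: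
  fixes G :: "3 \<Rightarrow> real \<Rightarrow> real"
  assumes int: "\<And>i. integrable lborel (G i)"
  shows "has_bochner_integral lborel (\<lambda>v::real^3. \<Prod>i\<in>UNIV. G i (v$i)) (\<Prod>i\<in>UNIV. integral\<^sup>L lborel (G i))"
proof -
  interpret P: product_sigma_finite "\<lambda>_::real^3. lborel::real measure"
    by (simp add: product_sigma_finite_def sigma_finite_lborel)
  define F where "F b = G (axis_index b)" for b :: "real^3"
  define \<phi> where "\<phi> = (\<lambda>f. \<Sum>b\<in>Basis. f b *\<^sub>R b :: real^3)"
  have phi_b: "\<phi> f \<bullet> b = f b" if "b \<in> Basis" for f b
    using that unfolding \<phi>_def
    by (simp add: inner_sum_left inner_Basis if_distrib cong: if_cong)
  have B: "(Basis :: (real^3) set) = range (\<lambda>i::3. axis i (1::real))"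
    by (auto simp: Basis_vec_def)
  have reix: "prod h (Basis :: (real^3) set) = (\<Prod>i\<in>UNIV. h (axis i 1))" for h :: "real^3 \<Rightarrow> real"
    unfolding B by (subst prod.reindex) (auto simp: inj_on_def axis_eq_axis)
  have eqf: "(\<Prod>i\<in>UNIV. G i (v$i)) = (\<Prod>b\<in>Basis. F b (v \<bullet> b))" for v :: "real^3"
  proof -
    have "(\<Prod>b\<in>Basis. F b (v \<bullet> b)) = (\<Prod>i\<in>UNIV. F (axis i 1) (v \<bullet> axis i 1))"
      by (rule reix)
    then show ?thesis by (simp add: F_def inner_axis)
  qed
  have eqi: "(\<Prod>i\<in>UNIV. integral\<^sup>L lborel (G i)) = (\<Prod>b\<in>Basis. integral\<^sup>L lborel (F b))"
  proof -
    have "(\<Prod>b\<in>Basis. integral\<^sup>L lborel (F b)) = (\<Prod>i\<in>UNIV. integral\<^sup>L lborel (F (axis i 1)))"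
      by (rule reix)
    then show ?thesis by (simp add: F_def)
  qed
  have intF: "\<And>b. b \<in> Basis \<Longrightarrow> integrable lborel (F b)" using int by (simp add: F_def)
  have m: "\<phi> \<in> measurable (\<Pi>\<^sub>M b\<in>Basis. lborel) borel" unfolding \<phi>_def by measurable
  have i1: "integrable (\<Pi>\<^sub>M b\<in>Basis. lborel) (\<lambda>f. \<Prod>b\<in>Basis. F b (f b))"
    by (rule P.product_integrable_prod) (auto intro: intF)
  have i2: "integrable (\<Pi>\<^sub>M b\<in>Basis. lborel) (\<lambda>f. \<Prod>b\<in>Basis. F b (\<phi> f \<bullet> b))"
  proof -
    have "(\<lambda>f. \<Prod>b\<in>Basis. F b (\<phi> f \<bullet> b)) = (\<lambda>f. \<Prod>b\<in>Basis. F b (f b))"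
      by (intro ext prod.cong) (auto simp: phi_b)
    then show ?thesis using i1 by simp
  qed
  have mb: "(\<lambda>v::real^3. \<Prod>b\<in>Basis. F b (v \<bullet> b)) \<in> borel_measurable borel"
  proof (intro borel_measurable_prod)
    fix b :: "real^3" assume b: "b \<in> Basis"
    have Fm: "F b \<in> borel_measurable borel" using borel_measurable_integrable[OF intF[OF b]] by simp
    show "(\<lambda>v::real^3. F b (v \<bullet> b)) \<in> borel_measurable borel"
      by (rule measurable_compose[OF _ Fm]) measurable
  qed
  have LE: "(lborel :: (real^3) measure) = distr (\<Pi>\<^sub>M b\<in>Basis. lborel) borel \<phi>"
    unfolding \<phi>_def by (rule lborel_eq)
  have "integrable lborel (\<lambda>v::real^3. \<Prod>b\<in>Basis. F b (v \<bullet> b))"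
    unfolding LE by (subst integrable_distr_eq[OF m mb]) (rule i2)
  moreover have "integral\<^sup>L lborel (\<lambda>v::real^3. \<Prod>b\<in>Basis. F b (v \<bullet> b)) = (\<Prod>b\<in>Basis. integral\<^sup>L lborel (F b))"
  proof -
    have "integral\<^sup>L lborel (\<lambda>v::real^3. \<Prod>b\<in>Basis. F b (v \<bullet> b))
       = integral\<^sup>L (\<Pi>\<^sub>M b\<in>Basis. lborel) (\<lambda>f. \<Prod>b\<in>Basis. F b (\<phi> f \<bullet> b))"
      unfolding LE by (rule integral_distr[OF m mb])
    also have "\<dots> = integral\<^sup>L (\<Pi>\<^sub>M b\<in>Basis. lborel) (\<lambda>f. \<Prod>b\<in>Basis. F b (f b))"
      by (rule Bochner_Integration.integral_cong) (auto simp: phi_b)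
    also have "\<dots> = (\<Prod>b\<in>Basis. integral\<^sup>L lborel (F b))"
      by (rule P.product_integral_prod) (auto intro: intF)
    finally show ?thesis .
  qed
  ultimately show ?thesis unfolding eqf eqi
    by (simp add: has_bochner_integral_iff)
qed

lemma prod_3: "prod f (UNIV::3 set) = f 1 * f 2 * f 3"
  unfolding UNIV_3 by (simp add: ac_simps)

definition gd :: "real \<Rightarrow> real \<Rightarrow> real" where
  "gd m t = normal_density 0 (1 / sqrt m) t"

definition Mom :: "real \<Rightarrow> nat \<Rightarrow> real" where
  "Mom m k = (LINT t|lborel. gd m t * t ^ k)"

lemma gd_int: "m > 0 \<Longrightarrow> integrable lborel (\<lambda>t. gd m t * t ^ k)"
  unfolding gd_def using integrable_normal_moment[of "1 / sqrt m" 0 k] by simp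

lemma Mom_vals:
  assumes "m > 0"
  shows "Mom m 0 = 1" "Mom m 1 = 0" "Mom m 2 = 1 / m" "Mom m 3 = 0" "Mom m 4 = 3 / m\<^sup>2"
proof -
  have s: "0 < 1 / sqrt m" using assms by simp
  have ev: "Mom m (2*k) = fact (2 * k) / ((2 / (1 / sqrt m)\<^sup>2)^k * fact k)" for k
    unfolding Mom_def gd_def using integral_normal_moment_even[OF s, of 0 k] by simp
  have od: "Mom m (2*k+1) = 0" for k
    unfolding Mom_def gd_def using integral_normal_moment_odd[OF s, of 0 k] by simp
  show "Mom m 0 = 1" using ev[of 0] by simp
  show "Mom m 1 = 0" using od[of 0] by simp
  show "Mom m 3 = 0" using od[of 1] by simp
  show "Mom m 2 = 1 / m" using ev[of 1] assms by (simp add: fact_numeral power_divide)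
  show "Mom m 4 = 3 / m\<^sup>2" using ev[of 2] assms by (simp add: fact_numeral power_divide)
qed

lemma Mw_prod:
  assumes "m > 0"
  shows "Mw m n v = n * (gd m (v$1) * gd m (v$2) * gd m (v$3))"
proof -
  have nv: "(norm v)\<^sup>2 = (v$1)\<^sup>2 + (v$2)\<^sup>2 + (v$3)\<^sup>2"
    by (simp only: power2_norm_eq_inner) (simp add: inner_vec_def sum_3 power2_eq_square)
  have p: "(m / (2 * pi)) powr (3/2) = sqrt (m / (2*pi)) ^ 3"
    using assms by (simp add: powr_half_sqrt[symmetric] powr_realpow[symmetric] powr_powr)
  have s2: "(1 / sqrt m)\<^sup>2 = 1 / m" using assms by (simp add: power_divide)
  have g: "gd m t = sqrt (m / (2*pi)) * exp (- m * t\<^sup>2 / 2)" for t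
  proof -
    have "gd m t = 1 / sqrt (2 * pi * (1 / m)) * exp (- (t\<^sup>2) / (2 * (1 / m)))"
      unfolding gd_def normal_density_def s2 by simp
    also have "1 / sqrt (2 * pi * (1 / m)) = sqrt (m / (2*pi))"
      by (simp add: real_sqrt_divide real_sqrt_mult)
    also have "- (t\<^sup>2) / (2 * (1 / m)) = - m * t\<^sup>2 / 2"
      using assms by simp
    finally show ?thesis .
  qed
  have e: "exp (- m * x / 2) * exp (- m * y / 2) * exp (- m * z / 2) = exp (- m * (x + y + z) / 2)" for x y z
    unfolding exp_add[symmetric] by (rule arg_cong[where f=exp]) (simp add: field_simps)
  show ?thesis unfolding Mw_def nv p g e[symmetric]
    by (simp only: power3_eq_cube mult_ac)
qed

lemma mono_hbi:
  assumes "m > 0"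
  shows "has_bochner_integral lborel (\<lambda>v::real^3. Mw m n v * ((v$1)^a * (v$2)^b * (v$3)^c))
           (n * (Mom m a * Mom m b * Mom m c))"
proof -
  define K where "K i = (if i = 1 then a else if i = 2 then b else c)" for i :: 3
  have K: "K 1 = a" "K 2 = b" "K 3 = c" by (simp_all add: K_def)
  have h: "has_bochner_integral lborel (\<lambda>v::real^3. \<Prod>i\<in>UNIV. gd m (v$i) * (v$i)^(K i))
      (\<Prod>i\<in>UNIV. integral\<^sup>L lborel (\<lambda>t. gd m t * t^(K i)))"
    by (rule prod3_hbi) (rule gd_int[OF assms])
  have "has_bochner_integral lborel (\<lambda>v::real^3. n * (\<Prod>i\<in>UNIV. gd m (v$i) * (v$i)^(K i)))
      (n * (\<Prod>i\<in>UNIV. integral\<^sup>L lborel (\<lambda>t. gd m t * t^(K i))))"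
    by (rule has_bochner_integral_mult_right[OF h])
  moreover have "(\<lambda>v::real^3. n * (\<Prod>i\<in>UNIV. gd m (v$i) * (v$i)^(K i)))
     = (\<lambda>v::real^3. Mw m n v * ((v$1)^a * (v$2)^b * (v$3)^c))"
    by (rule ext) (simp only: prod_3 K Mw_prod[OF assms] mult_ac)
  moreover have "(\<Prod>i\<in>UNIV. integral\<^sup>L lborel (\<lambda>t. gd m t * t^(K i))) = Mom m a * Mom m b * Mom m c"
    by (simp only: prod_3 K Mom_def)
  ultimately show ?thesis by simp
qed

definition polyv :: "(real \<times> nat \<times> nat \<times> nat) list \<Rightarrow> real^3 \<Rightarrow> real" where
  "polyv ps v = (\<Sum>(c,a,b,d)\<leftarrow>ps. c * ((v$1)^a * (v$2)^b * (v$3)^d))"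

definition polyI :: "real \<Rightarrow> (real \<times> nat \<times> nat \<times> nat) list \<Rightarrow> real" where
  "polyI m ps = (\<Sum>(c,a,b,d)\<leftarrow>ps. c * (Mom m a * Mom m b * Mom m d))"

definition pmul :: "(real \<times> nat \<times> nat \<times> nat) list \<Rightarrow> (real \<times> nat \<times> nat \<times> nat) list \<Rightarrow> (real \<times> nat \<times> nat \<times> nat) list" where
  "pmul ps qs = concat (map (\<lambda>(c,a,b,d). map (\<lambda>(c',a',b',d'). (c*c', a+a', b+b', d+d')) qs) ps)"

lemma polyv_hbi:
  assumes "m > 0"
  shows "has_bochner_integral lborel (\<lambda>v. Mw m n v * polyv ps v) (n * polyI m ps)"
proof (induction ps)
  case Nil
  then show ?case by (simp add: polyv_def polyI_def has_bochner_integral_zero)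
next
  case (Cons p ps)
  obtain c a b d where p: "p = (c,a,b,d)" by (cases p) auto
  have h1: "has_bochner_integral lborel (\<lambda>v. c * (Mw m n v * ((v$1)^a * (v$2)^b * (v$3)^d))) (c * (n * (Mom m a * Mom m b * Mom m d)))"
    by (rule has_bochner_integral_mult_right[OF mono_hbi[OF assms]])
  have "has_bochner_integral lborel (\<lambda>v. c * (Mw m n v * ((v$1)^a * (v$2)^b * (v$3)^d)) + Mw m n v * polyv ps v)
     (c * (n * (Mom m a * Mom m b * Mom m d)) + n * polyI m ps)"
    by (rule has_bochner_integral_add[OF h1 Cons])
  then show ?case unfolding p by (simp add: polyv_def polyI_def algebra_simps)
qed

lemma polyv_pmul: "polyv (pmul ps qs) v = polyv ps v * polyv qs v"
proof (induction ps)
  case Nil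
  then show ?case by (simp add: polyv_def pmul_def)
next
  case (Cons p ps)
  obtain c a b d where p: "p = (c,a,b,d)" by (cases p) auto
  have "polyv (map (\<lambda>(c',a',b',d'). (c*c', a+a', b+b', d+d')) qs) v
        = c * ((v$1)^a * (v$2)^b * (v$3)^d) * polyv qs v"
    by (induction qs) (auto simp: polyv_def power_add algebra_simps)
  with Cons show ?case unfolding p by (simp add: polyv_def pmul_def algebra_simps)
qed

lemma Mw_nonneg: "n \<ge> 0 \<Longrightarrow> Mw m n v \<ge> 0"
  unfolding Mw_def by simp

definition E :: "real \<Rightarrow> real \<Rightarrow> nat \<Rightarrow> real^3 \<Rightarrow> real" where
  "E m n i = (if i = 0 then e1 m n else if i = 1 then emom m n 1 else if i = 2 then emom m n 2
      else if i = 3 then emom m n 3 else e5 m n)"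

definition QL :: "real \<Rightarrow> real \<Rightarrow> nat \<Rightarrow> (real \<times> nat \<times> nat \<times> nat) list" where
  "QL m n i = (if i = 0 then [(1 / sqrt n, 0, 0, 0)]
      else if i = 1 then [(sqrt (m / n), 1, 0, 0)]
      else if i = 2 then [(sqrt (m / n), 0, 1, 0)]
      else if i = 3 then [(sqrt (m / n), 0, 0, 1)]
      else [(m / sqrt (6 * n), 2, 0, 0), (m / sqrt (6 * n), 0, 2, 0), (m / sqrt (6 * n), 0, 0, 2),
            (- 3 / sqrt (6 * n), 0, 0, 0)])"

lemma norm3: "(norm (v::real^3))\<^sup>2 = (v$1)\<^sup>2 + (v$2)\<^sup>2 + (v$3)\<^sup>2"
  by (simp only: power2_norm_eq_inner) (simp add: inner_vec_def sum_3 power2_eq_square)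

lemma E_QL: "E m n i v = sqrt (Mw m n v) * polyv (QL m n i) v"
  unfolding E_def QL_def polyv_def e1_def emom_def e5_def
  by (cases "sqrt (6 * n) = 0") (auto simp: norm3 field_simps)

lemma Mw_meas[measurable]: "Mw m n \<in> borel_measurable borel"
  unfolding Mw_def by measurable
lemma e1_meas[measurable]: "e1 m n \<in> borel_measurable borel"
  unfolding e1_def by measurable
lemma emom_meas[measurable]: "emom m n j \<in> borel_measurable borel"
  unfolding emom_def by measurable
lemma e5_meas[measurable]: "e5 m n \<in> borel_measurable borel"
  unfolding e5_def by measurable
lemma E_meas[measurable]: "E m n i \<in> borel_measurable borel"
  unfolding E_def by simp

lemma EE_hbi:
  assumes "m > 0" "n > 0"
  shows "has_bochner_integral lborel (\<lambda>v. E m n i v * E m n j v) (n * polyI m (pmul (QL m n i) (QL m n j)))"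
proof -
  have "(\<lambda>v. E m n i v * E m n j v) = (\<lambda>v. Mw m n v * polyv (pmul (QL m n i) (QL m n j)) v)"
  proof
    fix v
    have "sqrt (Mw m n v) * sqrt (Mw m n v) = Mw m n v"
      using Mw_nonneg[of n m v] assms by simp
    then show "E m n i v * E m n j v = Mw m n v * polyv (pmul (QL m n i) (QL m n j)) v"
      unfolding E_QL polyv_pmul by (metis mult.assoc mult.left_commute)
  qed
  then show ?thesis using polyv_hbi[OF assms(1)] by simp
qed

lemma Mom_vals_Suc:
  assumes "m > 0"
  shows "Mom m (Suc 0) = 0" "Mom m (Suc (Suc 0)) = 1 / m" "Mom m (Suc (Suc (Suc 0))) = 0"
    "Mom m (Suc (Suc (Suc (Suc 0)))) = 3 / m\<^sup>2"
  using Mom_vals[OF assms] by (simp_all add: numeral_eq_Suc)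

lemma ON:
  assumes "m > 0" "n > 0" "i < 5" "j < 5"
  shows "integrable lborel (\<lambda>v. E m n i v * E m n j v)"
    "vinner (E m n i) (E m n j) = (if i = j then 1 else 0)"
proof -
  show "integrable lborel (\<lambda>v. E m n i v * E m n j v)"
    using EE_hbi[OF assms(1,2)] by (auto simp: has_bochner_integral_iff)
  have v: "vinner (E m n i) (E m n j) = n * polyI m (pmul (QL m n i) (QL m n j))"
    unfolding vinner_def using EE_hbi[OF assms(1,2)] by (simp add: has_bochner_integral_iff)
  have s: "sqrt (m / n) * sqrt (m / n) = m / n" "1 / sqrt n * (1 / sqrt n) = 1 / n"
     "sqrt (6 * n) * sqrt (6 * n) = 6 * n"
    using assms by (simp_all add: power2_eq_square[symmetric] power_divide)
  have i5: "i = 0 \<or> i = 1 \<or> i = 2 \<or> i = 3 \<or> i = 4" "j = 0 \<or> j = 1 \<or> j = 2 \<or> j = 3 \<or> j = 4"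
    using assms by auto
  show "vinner (E m n i) (E m n j) = (if i = j then 1 else 0)"
    unfolding v using i5 assms(1,2)
    apply (elim disjE)
    apply (simp_all add: QL_def pmul_def polyI_def Mom_vals Mom_vals_Suc)
    apply (simp_all add: field_simps power2_eq_square)
    done
qed

definition sqi :: "(real^3 \<Rightarrow> real) \<Rightarrow> bool" where
  "sqi f \<longleftrightarrow> f \<in> borel_measurable lborel \<and> integrable lborel (\<lambda>v. (f v)\<^sup>2)"

lemma abs_le_sq: "\<bar>a * b\<bar> \<le> a\<^sup>2 + b\<^sup>2" for a b :: real
proof -
  have "0 \<le> (a - b)\<^sup>2" "0 \<le> (a + b)\<^sup>2" "0 \<le> a\<^sup>2 + b\<^sup>2" by simp_all
  then have "2 * (a * b) \<le> a\<^sup>2 + b\<^sup>2" "- (2 * (a * b)) \<le> a\<^sup>2 + b\<^sup>2" "0 \<le> a\<^sup>2 + b\<^sup>2"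
    by (simp_all add: power2_eq_square algebra_simps)
  then show ?thesis by (simp add: abs_le_iff)
qed

lemma sqi_mult_int:
  assumes "sqi f" "sqi g"
  shows "integrable lborel (\<lambda>v. f v * g v)"
proof (rule Bochner_Integration.integrable_bound)
  show "integrable lborel (\<lambda>v. (f v)\<^sup>2 + (g v)\<^sup>2)"
    using assms unfolding sqi_def by auto
  show "(\<lambda>v. f v * g v) \<in> borel_measurable lborel" using assms unfolding sqi_def by auto
  show "AE x in lborel. norm (f x * g x) \<le> norm ((f x)\<^sup>2 + (g x)\<^sup>2)"
    using abs_le_sq by auto
qed

lemma sqi_E: "m > 0 \<Longrightarrow> n > 0 \<Longrightarrow> i < 5 \<Longrightarrow> sqi (E m n i)"
  unfolding sqi_def using ON(1)[of m n i i] by (simp add: power2_eq_square)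

lemma sum5: "(\<Sum>i<(5::nat). h i) = h 0 + h 1 + h 2 + h 3 + (h 4 :: real)"
  by (simp add: eval_nat_numeral)

context
  fixes m n :: real
  assumes mn: "m > 0" "n > 0"
begin

lemma fE_int: "sqi f \<Longrightarrow> i < 5 \<Longrightarrow> integrable lborel (\<lambda>v. f v * E m n i v)"
  using sqi_mult_int sqi_E[OF mn] by blast

lemma int_fS:
  assumes f: "sqi f"
  shows "integrable lborel (\<lambda>v. f v * (\<Sum>i<5. \<beta> i * E m n i v))"
    "(LINT v|lborel. f v * (\<Sum>i<5. \<beta> i * E m n i v)) = (\<Sum>i<5. \<beta> i * vinner f (E m n i))"
proof -
  have eq: "(\<lambda>v. f v * (\<Sum>i<5. \<beta> i * E m n i v)) = (\<lambda>v. \<Sum>i<5. \<beta> i * (f v * E m n i v))"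
    by (simp add: sum_distrib_left algebra_simps)
  show "integrable lborel (\<lambda>v. f v * (\<Sum>i<5. \<beta> i * E m n i v))"
    unfolding eq by (intro Bochner_Integration.integrable_sum integrable_mult_right fE_int[OF f]) auto
  show "(LINT v|lborel. f v * (\<Sum>i<5. \<beta> i * E m n i v)) = (\<Sum>i<5. \<beta> i * vinner f (E m n i))"
    unfolding eq vinner_def
    by (subst Bochner_Integration.integral_sum) (auto intro!: integrable_mult_right fE_int[OF f])
qed

lemma int_SS:
  shows "integrable lborel (\<lambda>v. (\<Sum>i<5. \<beta> i * E m n i v) * (\<Sum>i<5. \<gamma> i * E m n i v))"
    "(LINT v|lborel. (\<Sum>i<5. \<beta> i * E m n i v) * (\<Sum>i<5. \<gamma> i * E m n i v)) = (\<Sum>i<5. \<beta> i * \<gamma> i)"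
proof -
  have s: "sqi (\<lambda>v. \<Sum>i<5. \<beta> i * E m n i v)"
  proof -
    have "integrable lborel (\<lambda>v. (\<Sum>i<5. \<beta> i * E m n i v) * (\<Sum>i<5. \<beta> i * E m n i v))"
      using int_fS(1)[OF sqi_E[OF mn], of _ \<beta>] 
      by (simp add: sum_distrib_left sum_distrib_right mult_ac, intro Bochner_Integration.integrable_sum integrable_mult_right)
        (auto intro!: ON(1)[OF mn])
    then show ?thesis unfolding sqi_def power2_eq_square
      using E_meas by (auto intro!: borel_measurable_sum borel_measurable_times)
  qed
  show "integrable lborel (\<lambda>v. (\<Sum>i<5. \<beta> i * E m n i v) * (\<Sum>i<5. \<gamma> i * E m n i v))"
    using int_fS(1)[OF s] .
  have "(LINT v|lborel. (\<Sum>i<5. \<beta> i * E m n i v) * (\<Sum>i<5. \<gamma> i * E m n i v))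
      = (\<Sum>j<5. \<gamma> j * vinner (\<lambda>v. \<Sum>i<5. \<beta> i * E m n i v) (E m n j))"
    by (rule int_fS(2)[OF s])
  also have "\<dots> = (\<Sum>j<5. \<gamma> j * \<beta> j)"
  proof (rule sum.cong[OF refl])
    fix j assume j: "j \<in> {..<5::nat}"
    have sj: "sqi (E m n j)" using sqi_E[OF mn] j by auto
    have "vinner (\<lambda>v. \<Sum>i<5. \<beta> i * E m n i v) (E m n j) = vinner (E m n j) (\<lambda>v. \<Sum>i<5. \<beta> i * E m n i v)"
      unfolding vinner_def by (simp add: mult.commute)
    also have "\<dots> = (\<Sum>i<5. \<beta> i * vinner (E m n j) (E m n i))"
      using int_fS(2)[OF sj, of \<beta>] by (simp add: vinner_def)
    also have "\<dots> = (\<Sum>i<5. if i = j then \<beta> i else 0)"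
      by (rule sum.cong[OF refl]) (use j ON(2)[OF mn] in auto)
    also have "\<dots> = \<beta> j" using j by (simp add: sum.delta')
    finally show "\<gamma> j * vinner (\<lambda>v. \<Sum>i<5. \<beta> i * E m n i v) (E m n j) = \<gamma> j * \<beta> j" by simp
  qed
  finally show "(LINT v|lborel. (\<Sum>i<5. \<beta> i * E m n i v) * (\<Sum>i<5. \<gamma> i * E m n i v)) = (\<Sum>i<5. \<beta> i * \<gamma> i)"
    by (simp add: mult.commute)
qed

lemma vinner_res:
  assumes f: "sqi f"
  shows "vinner (\<lambda>v. f v - (\<Sum>i<5. \<alpha> i * E m n i v)) (\<lambda>v. \<Sum>i<5. \<beta> i * E m n i v)
       = (\<Sum>i<5. \<beta> i * (vinner f (E m n i) - \<alpha> i))"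
proof -
  have "vinner (\<lambda>v. f v - (\<Sum>i<5. \<alpha> i * E m n i v)) (\<lambda>v. \<Sum>i<5. \<beta> i * E m n i v)
     = (LINT v|lborel. f v * (\<Sum>i<5. \<beta> i * E m n i v) - (\<Sum>i<5. \<alpha> i * E m n i v) * (\<Sum>i<5. \<beta> i * E m n i v))"
    unfolding vinner_def by (simp add: algebra_simps)
  also have "\<dots> = (\<Sum>i<5. \<beta> i * vinner f (E m n i)) - (\<Sum>i<5. \<alpha> i * \<beta> i)"
    using int_fS[OF f, of \<beta>] int_SS[of \<alpha> \<beta>] by simp
  finally show ?thesis by (simp add: sum_subtractf algebra_simps)
qed

lemma sq_res:
  assumes f: "sqi f"
  shows "integrable lborel (\<lambda>v. (f v - (\<Sum>i<5. \<alpha> i * E m n i v))\<^sup>2)"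
    "(LINT v|lborel. (f v - (\<Sum>i<5. \<alpha> i * E m n i v))\<^sup>2)
       = vinner f f - 2 * (\<Sum>i<5. \<alpha> i * vinner f (E m n i)) + (\<Sum>i<5. (\<alpha> i)\<^sup>2)"
proof -
  have eq: "(\<lambda>v. (f v - (\<Sum>i<5. \<alpha> i * E m n i v))\<^sup>2) = (\<lambda>v. (f v)\<^sup>2 - 2 * (f v * (\<Sum>i<5. \<alpha> i * E m n i v))
        + (\<Sum>i<5. \<alpha> i * E m n i v) * (\<Sum>i<5. \<alpha> i * E m n i v))"
    by (simp add: power2_eq_square algebra_simps)
  have i1: "integrable lborel (\<lambda>v. (f v)\<^sup>2)" using f unfolding sqi_def by auto
  show "integrable lborel (\<lambda>v. (f v - (\<Sum>i<5. \<alpha> i * E m n i v))\<^sup>2)"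
    unfolding eq using i1 int_fS(1)[OF f, of \<alpha>] int_SS(1)[of \<alpha> \<alpha>] by auto
  have "vinner f f = (LINT v|lborel. (f v)\<^sup>2)" unfolding vinner_def by (simp add: power2_eq_square)
  then show "(LINT v|lborel. (f v - (\<Sum>i<5. \<alpha> i * E m n i v))\<^sup>2)
       = vinner f f - 2 * (\<Sum>i<5. \<alpha> i * vinner f (E m n i)) + (\<Sum>i<5. (\<alpha> i)\<^sup>2)"
    unfolding eq using i1 int_fS[OF f, of \<alpha>] int_SS[of \<alpha> \<alpha>] by (simp add: power2_eq_square)
qed

end

lemma mom_comp:
  fixes a b m1 m2 n10 n20 \<delta> t :: real
  assumes "m1 \<ge> m2" "m2 > 0" "n10 > 0" "n20 > 0" "0 \<le> t" "t \<le> 1 - \<delta>"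
  defines "p \<equiv> sqrt (m1 * n10)" and "q \<equiv> sqrt (m2 * n20)"
  defines "\<alpha> \<equiv> p * (p * a + q * b) / (m1 * n10 + m2 * n20)" and "\<beta> \<equiv> q * (p * a + q * b) / (m1 * n10 + m2 * n20)"
  shows "n20 * ((1 - \<delta>) * (sqrt (n10 / n20) * sqrt (m1 / m2) * b - a)) * a
       + n10 * (m1 / m2 * (1 - \<delta>) * (sqrt (n20 / n10) * sqrt (m2 / m1) * a - b)) * b
       \<le> - (n10 + n20) * (t * ((a - \<alpha>)\<^sup>2 + (b - \<beta>)\<^sup>2))"
proof -
  define r1 where "r1 = sqrt n10"
  define r2 where "r2 = sqrt n20"
  define u1 where "u1 = sqrt m1"
  define u2 where "u2 = sqrt m2"
  have pos: "r1 > 0" "r2 > 0" "u1 > 0" "u2 > 0" using assms by (auto simp: r1_def r2_def u1_def u2_def)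
  have sq: "n10 = r1\<^sup>2" "n20 = r2\<^sup>2" "m1 = u1\<^sup>2" "m2 = u2\<^sup>2" using assms by (auto simp: r1_def r2_def u1_def u2_def)
  have pq: "p = u1 * r1" "q = u2 * r2" unfolding p_def q_def r1_def r2_def u1_def u2_def by (simp_all add: real_sqrt_mult)
  have s1: "sqrt (n10 / n20) * sqrt (m1 / m2) = (r1 / r2) * (u1 / u2)"
    unfolding r1_def r2_def u1_def u2_def by (simp add: real_sqrt_divide)
  have s2: "sqrt (n20 / n10) * sqrt (m2 / m1) = (r2 / r1) * (u2 / u1)"
    unfolding r1_def r2_def u1_def u2_def by (simp add: real_sqrt_divide)
  define Z where "Z = q * a - p * b"
  define S where "S = p\<^sup>2 + q\<^sup>2"
  have Spos: "S > 0" unfolding S_def pq using pos by (simp add: add_pos_pos)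
  have lhs: "n20 * ((1 - \<delta>) * (sqrt (n10 / n20) * sqrt (m1 / m2) * b - a)) * a
       + n10 * (m1 / m2 * (1 - \<delta>) * (sqrt (n20 / n10) * sqrt (m2 / m1) * a - b)) * b
       = - (1 - \<delta>) * Z\<^sup>2 / m2"
    unfolding s1 s2 unfolding Z_def pq sq using pos by (simp add: field_simps power2_eq_square)
  have S2': "S = m1 * n10 + m2 * n20" unfolding S_def p_def q_def using assms by simp
  have al: "\<alpha> = p * (p * a + q * b) / S" "\<beta> = q * (p * a + q * b) / S"
    unfolding \<alpha>_def \<beta>_def S2' by simp_all
  have e: "a * S - p * (p * a + q * b) = q * Z" "b * S - q * (p * a + q * b) = - (p * Z)"
    unfolding S_def Z_def by (simp_all add: power2_eq_square algebra_simps)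
  have "a - \<alpha> = (a * S - p * (p * a + q * b)) / S" "b - \<beta> = (b * S - q * (p * a + q * b)) / S"
    unfolding al using Spos by (simp_all add: field_simps)
  then have d: "a - \<alpha> = q * Z / S" "b - \<beta> = - (p * Z) / S" unfolding e .
  have rhs: "(a - \<alpha>)\<^sup>2 + (b - \<beta>)\<^sup>2 = Z\<^sup>2 / S"
  proof -
    have "(a - \<alpha>)\<^sup>2 + (b - \<beta>)\<^sup>2 = (p\<^sup>2 + q\<^sup>2) * Z\<^sup>2 / S\<^sup>2"
      unfolding d by (simp add: power_divide power_mult_distrib add_divide_distrib algebra_simps)
    also have "\<dots> = Z\<^sup>2 / S" unfolding S_def[symmetric] using Spos by (simp add: power2_eq_square)
    finally show ?thesis .
  qed
  have key: "(n10 + n20) * t / S \<le> (1 - \<delta>) / m2"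
  proof -
    have S2: "S = m1 * n10 + m2 * n20" unfolding S_def p_def q_def using assms by simp
    have "n10 * m2 \<le> n10 * m1" using assms by (intro mult_left_mono) auto
    then have NS: "(n10 + n20) * m2 \<le> S" unfolding S2 by (simp add: algebra_simps)
    have d0: "0 \<le> 1 - \<delta>" using assms by linarith
    have N0: "0 \<le> n10 + n20" using assms by simp
    have "(n10 + n20) * t * m2 \<le> (n10 + n20) * (1 - \<delta>) * m2"
      using assms N0 by (intro mult_right_mono mult_left_mono) auto
    also have "\<dots> = (1 - \<delta>) * ((n10 + n20) * m2)" by (simp add: algebra_simps)
    also have "\<dots> \<le> (1 - \<delta>) * S" by (rule mult_left_mono[OF NS d0])
    finally have "(n10 + n20) * t * m2 \<le> (1 - \<delta>) * S" .
    then show ?thesis using Spos assms by (simp add: field_simps)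
  qed
  have "(n10 + n20) * t / S * Z\<^sup>2 \<le> (1 - \<delta>) / m2 * Z\<^sup>2"
    by (rule mult_right_mono[OF key]) simp
  moreover have "- (1 - \<delta>) * Z\<^sup>2 / m2 = - ((1 - \<delta>) / m2 * Z\<^sup>2)" by (simp add: divide_simps algebra_simps)
  moreover have "- (n10 + n20) * (t * (Z\<^sup>2 / S)) = - ((n10 + n20) * t / S * Z\<^sup>2)" by (simp add: divide_simps algebra_simps)
  ultimately show ?thesis unfolding lhs rhs by linarith
qed

lemma en_comp:
  fixes a b n10 n20 \<omega> t :: real
  assumes "n10 > 0" "n20 > 0" "0 \<le> t" "t \<le> 1 - \<omega>"
  defines "\<alpha> \<equiv> sqrt n10 * (sqrt n10 * a + sqrt n20 * b) / (n10 + n20)"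
    and "\<beta> \<equiv> sqrt n20 * (sqrt n10 * a + sqrt n20 * b) / (n10 + n20)"
  shows "n20 * ((1 - \<omega>) * (sqrt (n10 / n20) * b - a)) * a
       + n10 * ((1 - \<omega>) * (sqrt (n20 / n10) * a - b)) * b
       \<le> - (n10 + n20) * (t * ((a - \<alpha>)\<^sup>2 + (b - \<beta>)\<^sup>2))"
proof -
  define r1 where "r1 = sqrt n10"
  define r2 where "r2 = sqrt n20"
  have pos: "r1 > 0" "r2 > 0" using assms by (auto simp: r1_def r2_def)
  have sq: "n10 = r1\<^sup>2" "n20 = r2\<^sup>2" using assms by (auto simp: r1_def r2_def)
  have s1: "sqrt (n10 / n20) = r1 / r2" "sqrt (n20 / n10) = r2 / r1"
    unfolding r1_def r2_def by (simp_all add: real_sqrt_divide)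
  define Y where "Y = r2 * a - r1 * b"
  have lhs: "n20 * ((1 - \<omega>) * (sqrt (n10 / n20) * b - a)) * a
       + n10 * ((1 - \<omega>) * (sqrt (n20 / n10) * a - b)) * b = - (1 - \<omega>) * Y\<^sup>2"
    unfolding s1 unfolding Y_def sq using pos by (simp add: field_simps power2_eq_square)
  have S: "r1\<^sup>2 + r2\<^sup>2 > 0" using pos by (simp add: add_pos_pos)
  define T where "T = r1\<^sup>2 + r2\<^sup>2"
  have Tn: "n10 + n20 = T" unfolding T_def sq ..
  have al: "\<alpha> = r1 * (r1 * a + r2 * b) / T" "\<beta> = r2 * (r1 * a + r2 * b) / T"
    unfolding \<alpha>_def \<beta>_def Tn r1_def r2_def by simp_all
  have e: "a * T - r1 * (r1 * a + r2 * b) = r2 * Y" "b * T - r2 * (r1 * a + r2 * b) = - (r1 * Y)"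
    unfolding T_def Y_def by (simp_all add: power2_eq_square algebra_simps)
  have "a - \<alpha> = (a * T - r1 * (r1 * a + r2 * b)) / T" "b - \<beta> = (b * T - r2 * (r1 * a + r2 * b)) / T"
    unfolding al using S unfolding T_def[symmetric] by (simp_all add: field_simps)
  then have d: "a - \<alpha> = r2 * Y / T" "b - \<beta> = - (r1 * Y) / T" unfolding e .
  have rhs: "(n10 + n20) * ((a - \<alpha>)\<^sup>2 + (b - \<beta>)\<^sup>2) = Y\<^sup>2"
  proof -
    have "(a - \<alpha>)\<^sup>2 + (b - \<beta>)\<^sup>2 = (r1\<^sup>2 + r2\<^sup>2) * Y\<^sup>2 / T\<^sup>2"
      unfolding d by (simp add: power_divide power_mult_distrib add_divide_distrib algebra_simps)
    then show ?thesis unfolding Tn unfolding T_def[symmetric] using S T_def pos by (simp add: power2_eq_square)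
  qed
  have "t * Y\<^sup>2 \<le> (1 - \<omega>) * Y\<^sup>2" by (rule mult_right_mono) (use assms in auto)
  moreover have "- (n10 + n20) * (t * ((a - \<alpha>)\<^sup>2 + (b - \<beta>)\<^sup>2)) = - (t * ((n10 + n20) * ((a - \<alpha>)\<^sup>2 + (b - \<beta>)\<^sup>2)))"
    by (simp add: algebra_simps)
  moreover have "- (1 - \<omega>) * Y\<^sup>2 = - ((1 - \<omega>) * Y\<^sup>2)" by (simp add: algebra_simps)
  ultimately show ?thesis unfolding lhs rhs by linarith
qed

definition K1c :: "real \<Rightarrow> real \<Rightarrow> real \<Rightarrow> real \<Rightarrow> real \<Rightarrow> real \<Rightarrow> (nat \<Rightarrow> real) \<Rightarrow> (nat \<Rightarrow> real) \<Rightarrow> nat \<Rightarrow> real" where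
  "K1c m1 m2 n10 n20 \<delta> \<omega> a b i = (n10 + n20) * a i + n20 *
     (if i \<in> {1,2,3} then (1 - \<delta>) * (sqrt (n10 / n20) * sqrt (m1 / m2) * b i - a i)
      else if i = 4 then (1 - \<omega>) * (sqrt (n10 / n20) * b 4 - a 4) else 0)"

definition K2c :: "real \<Rightarrow> real \<Rightarrow> real \<Rightarrow> real \<Rightarrow> real \<Rightarrow> real \<Rightarrow> (nat \<Rightarrow> real) \<Rightarrow> (nat \<Rightarrow> real) \<Rightarrow> nat \<Rightarrow> real" where
  "K2c m1 m2 n10 n20 \<delta> \<omega> a b i = (n10 + n20) * b i + n10 *
     (if i \<in> {1,2,3} then m1 / m2 * (1 - \<delta>) * (sqrt (n20 / n10) * sqrt (m2 / m1) * a i - b i)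
      else if i = 4 then (1 - \<omega>) * (sqrt (n20 / n10) * a 4 - b 4) else 0)"

definition alc :: "real \<Rightarrow> real \<Rightarrow> real \<Rightarrow> real \<Rightarrow> (nat \<Rightarrow> real) \<Rightarrow> (nat \<Rightarrow> real) \<Rightarrow> nat \<Rightarrow> real" where
  "alc m1 m2 n10 n20 a b i = (if i = 0 then a 0
     else if i \<in> {1,2,3} then sqrt (m1 * n10) * (sqrt (m1 * n10) * a i + sqrt (m2 * n20) * b i) / (m1 * n10 + m2 * n20)
     else if i = 4 then sqrt n10 * (sqrt n10 * a 4 + sqrt n20 * b 4) / (n10 + n20) else 0)"

definition bec :: "real \<Rightarrow> real \<Rightarrow> real \<Rightarrow> real \<Rightarrow> (nat \<Rightarrow> real) \<Rightarrow> (nat \<Rightarrow> real) \<Rightarrow> nat \<Rightarrow> real" where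
  "bec m1 m2 n10 n20 a b i = (if i = 0 then b 0
     else if i \<in> {1,2,3} then sqrt (m2 * n20) * (sqrt (m1 * n10) * a i + sqrt (m2 * n20) * b i) / (m1 * n10 + m2 * n20)
     else if i = 4 then sqrt n20 * (sqrt n10 * a 4 + sqrt n20 * b 4) / (n10 + n20) else 0)"

lemma sum5': "(\<Sum>i<(5::nat). h i) = h 0 + h 1 + h 2 + h 3 + (h 4 :: real)"
  by (simp add: eval_nat_numeral)

lemma assemble:
  fixes m1 m2 n10 n20 \<delta> \<omega> F1 F2 :: real and a b :: "nat \<Rightarrow> real"
  assumes "m1 \<ge> m2" "m2 > 0" "n10 > 0" "n20 > 0"
    and "0 \<le> \<delta>" "\<delta> < 1" "0 \<le> \<omega>" "\<omega> < 1"
  defines "K1 \<equiv> K1c m1 m2 n10 n20 \<delta> \<omega> a b" and "K2 \<equiv> K2c m1 m2 n10 n20 \<delta> \<omega> a b"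
    and "\<alpha> \<equiv> alc m1 m2 n10 n20 a b" and "\<beta> \<equiv> bec m1 m2 n10 n20 a b"
  shows "(\<Sum>i<5. K1 i * a i) - (n10 + n20) * F1 + ((\<Sum>i<5. K2 i * b i) - (n10 + n20) * F2)
     \<le> - (n10 + n20) * (max \<delta> \<omega> * ((F1 - (\<Sum>i<5. (a i)\<^sup>2)) + (F2 - (\<Sum>i<5. (b i)\<^sup>2)))
        + min (1 - \<delta>) (1 - \<omega>) * ((F1 - 2 * (\<Sum>i<5. \<alpha> i * a i) + (\<Sum>i<5. (\<alpha> i)\<^sup>2))
                                  + (F2 - 2 * (\<Sum>i<5. \<beta> i * b i) + (\<Sum>i<5. (\<beta> i)\<^sup>2))))"
proof -
  define t where "t = min (1 - \<delta>) (1 - \<omega>)"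
  define N where "N = n10 + n20"
  have t: "0 \<le> t" "t \<le> 1 - \<delta>" "t \<le> 1 - \<omega>" "max \<delta> \<omega> = 1 - t"
    unfolding t_def using assms by (auto simp: min_def max_def)
  define A where "A = (F1 - (\<Sum>i<5. (a i)\<^sup>2)) + (F2 - (\<Sum>i<5. (b i)\<^sup>2))"
  define T where "T j = n20 * ((1 - \<delta>) * (sqrt (n10 / n20) * sqrt (m1 / m2) * b j - a j)) * a j
       + n10 * (m1 / m2 * (1 - \<delta>) * (sqrt (n20 / n10) * sqrt (m2 / m1) * a j - b j)) * b j" for j
  define T4 where "T4 = n20 * ((1 - \<omega>) * (sqrt (n10 / n20) * b 4 - a 4)) * a 4
       + n10 * ((1 - \<omega>) * (sqrt (n20 / n10) * a 4 - b 4)) * b 4"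
  define R where "R j = - N * (t * ((a j - \<alpha> j)\<^sup>2 + (b j - \<beta> j)\<^sup>2))" for j
  have TR: "T j \<le> R j" if "j \<in> {1,2,3}" for j
  proof -
    have "\<alpha> j = sqrt (m1 * n10) * (sqrt (m1 * n10) * a j + sqrt (m2 * n20) * b j) / (m1 * n10 + m2 * n20)"
         "\<beta> j = sqrt (m2 * n20) * (sqrt (m1 * n10) * a j + sqrt (m2 * n20) * b j) / (m1 * n10 + m2 * n20)"
      using that unfolding \<alpha>_def \<beta>_def alc_def bec_def by auto
    then show ?thesis unfolding T_def R_def N_def
      using mom_comp[of m2 m1 n10 n20 t \<delta> "b j" "a j"] assms t by simp
  qed
  have TR4: "T4 \<le> R 4"
  proof -
    have "\<alpha> 4 = sqrt n10 * (sqrt n10 * a 4 + sqrt n20 * b 4) / (n10 + n20)"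
         "\<beta> 4 = sqrt n20 * (sqrt n10 * a 4 + sqrt n20 * b 4) / (n10 + n20)"
      unfolding \<alpha>_def \<beta>_def alc_def bec_def by auto
    then show ?thesis unfolding T4_def R_def N_def
      using en_comp[of n10 n20 t \<omega> "b 4" "a 4"] assms t by simp
  qed
  have a0: "\<alpha> 0 = a 0" "\<beta> 0 = b 0" unfolding \<alpha>_def \<beta>_def alc_def bec_def by auto
  have L: "(\<Sum>i<5. K1 i * a i) - (n10 + n20) * F1 + ((\<Sum>i<5. K2 i * b i) - (n10 + n20) * F2)
      = - N * A + (T 1 + T 2 + T 3 + T4)"
    unfolding K1_def K2_def K1c_def K2c_def sum5' A_def N_def T_def T4_def
    by (simp add: algebra_simps power2_eq_square)
  have Rr: "- (n10 + n20) * (max \<delta> \<omega> * A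
        + min (1 - \<delta>) (1 - \<omega>) * ((F1 - 2 * (\<Sum>i<5. \<alpha> i * a i) + (\<Sum>i<5. (\<alpha> i)\<^sup>2))
                                  + (F2 - 2 * (\<Sum>i<5. \<beta> i * b i) + (\<Sum>i<5. (\<beta> i)\<^sup>2))))
      = - N * A + (R 1 + R 2 + R 3 + R 4)"
    unfolding t_def[symmetric] t(4) sum5' A_def N_def R_def a0
    by (simp add: algebra_simps power2_eq_square)
  show ?thesis unfolding A_def[symmetric] L Rr using TR[of 1] TR[of 2] TR[of 3] TR4 by simp
qed

lemma Pk_form: "Pk m n f v = (\<Sum>i<5. vinner f (E m n i) * E m n i v)"
  unfolding Pk_def sum5 sum_3 E_def by (simp add: add.assoc)

lemma Lop_fst:
  "fst (Lop m1 m2 n10 n20 \<delta> \<omega> f1 f2) v =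
    (\<Sum>i<5. K1c m1 m2 n10 n20 \<delta> \<omega> (\<lambda>i. vinner f1 (E m1 n10 i)) (\<lambda>i. vinner f2 (E m2 n20 i)) i * E m1 n10 i v)
    - (n10 + n20) * f1 v"
  unfolding Lop_def L11_def L12_def Pk_form sum5 sum_3 K1c_def by (simp add: E_def algebra_simps)

lemma Lop_snd:
  "snd (Lop m1 m2 n10 n20 \<delta> \<omega> f1 f2) v =
    (\<Sum>i<5. K2c m1 m2 n10 n20 \<delta> \<omega> (\<lambda>i. vinner f1 (E m1 n10 i)) (\<lambda>i. vinner f2 (E m2 n20 i)) i * E m2 n20 i v)
    - (n10 + n20) * f2 v"
  unfolding Lop_def L22_def L21_def Pk_form sum5 sum_3 K2c_def by (simp add: E_def algebra_simps)

lemma vinner_sq: "vinner f f = (LINT v|lborel. (f v)\<^sup>2)"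
  unfolding vinner_def by (simp add: power2_eq_square)

lemma ell:
  assumes pos: "m1 > 0" "m2 > 0" "n10 > 0" "n20 > 0" and f: "sqi f1" "sqi f2"
  defines "a \<equiv> (\<lambda>i. vinner f1 (E m1 n10 i))" and "b \<equiv> (\<lambda>i. vinner f2 (E m2 n20 i))"
  shows "integrable lborel (\<lambda>v. fst (Lop m1 m2 n10 n20 \<delta> \<omega> f1 f2) v * f1 v + snd (Lop m1 m2 n10 n20 \<delta> \<omega> f1 f2) v * f2 v)"
    "(LINT v|lborel. fst (Lop m1 m2 n10 n20 \<delta> \<omega> f1 f2) v * f1 v + snd (Lop m1 m2 n10 n20 \<delta> \<omega> f1 f2) v * f2 v)
     = (\<Sum>i<5. K1c m1 m2 n10 n20 \<delta> \<omega> a b i * a i) - (n10 + n20) * vinner f1 f1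
       + ((\<Sum>i<5. K2c m1 m2 n10 n20 \<delta> \<omega> a b i * b i) - (n10 + n20) * vinner f2 f2)"
proof -
  define K1 where "K1 = K1c m1 m2 n10 n20 \<delta> \<omega> a b"
  define K2 where "K2 = K2c m1 m2 n10 n20 \<delta> \<omega> a b"
  have eq: "(\<lambda>v. fst (Lop m1 m2 n10 n20 \<delta> \<omega> f1 f2) v * f1 v + snd (Lop m1 m2 n10 n20 \<delta> \<omega> f1 f2) v * f2 v)
    = (\<lambda>v. (f1 v * (\<Sum>i<5. K1 i * E m1 n10 i v) - (n10 + n20) * (f1 v)\<^sup>2)
         + (f2 v * (\<Sum>i<5. K2 i * E m2 n20 i v) - (n10 + n20) * (f2 v)\<^sup>2))"
    unfolding Lop_fst Lop_snd K1_def K2_def a_def b_def by (simp add: algebra_simps power2_eq_square)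
  have i1: "integrable lborel (\<lambda>v. (f1 v)\<^sup>2)" "integrable lborel (\<lambda>v. (f2 v)\<^sup>2)"
    using f unfolding sqi_def by auto
  note A1 = int_fS[OF pos(1,3) f(1), of K1]
  note A2 = int_fS[OF pos(2,4) f(2), of K2]
  show "integrable lborel (\<lambda>v. fst (Lop m1 m2 n10 n20 \<delta> \<omega> f1 f2) v * f1 v + snd (Lop m1 m2 n10 n20 \<delta> \<omega> f1 f2) v * f2 v)"
    unfolding eq using A1(1) A2(1) i1 by auto
  show "(LINT v|lborel. fst (Lop m1 m2 n10 n20 \<delta> \<omega> f1 f2) v * f1 v + snd (Lop m1 m2 n10 n20 \<delta> \<omega> f1 f2) v * f2 v)
     = (\<Sum>i<5. K1c m1 m2 n10 n20 \<delta> \<omega> a b i * a i) - (n10 + n20) * vinner f1 f1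
       + ((\<Sum>i<5. K2c m1 m2 n10 n20 \<delta> \<omega> a b i * b i) - (n10 + n20) * vinner f2 f2)"
    unfolding eq vinner_sq using A1 A2 i1
    by (simp add: K1_def[symmetric] K2_def[symmetric] mult.commute) (simp add: a_def b_def)
qed

lemma Aterm:
  assumes pos: "m1 > 0" "m2 > 0" "n10 > 0" "n20 > 0" and f: "sqi f1" "sqi f2"
  shows "integrable lborel (\<lambda>v. (f1 v - Pk m1 n10 f1 v)\<^sup>2 + (f2 v - Pk m2 n20 f2 v)\<^sup>2)"
    "(LINT v|lborel. (f1 v - Pk m1 n10 f1 v)\<^sup>2 + (f2 v - Pk m2 n20 f2 v)\<^sup>2)
      = (vinner f1 f1 - (\<Sum>i<5. (vinner f1 (E m1 n10 i))\<^sup>2)) + (vinner f2 f2 - (\<Sum>i<5. (vinner f2 (E m2 n20 i))\<^sup>2))"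
proof -
  note S1 = sq_res[OF pos(1,3) f(1), of "\<lambda>i. vinner f1 (E m1 n10 i)"]
  note S2 = sq_res[OF pos(2,4) f(2), of "\<lambda>i. vinner f2 (E m2 n20 i)"]
  show "integrable lborel (\<lambda>v. (f1 v - Pk m1 n10 f1 v)\<^sup>2 + (f2 v - Pk m2 n20 f2 v)\<^sup>2)"
    unfolding Pk_form using S1(1) S2(1) by auto
  show "(LINT v|lborel. (f1 v - Pk m1 n10 f1 v)\<^sup>2 + (f2 v - Pk m2 n20 f2 v)\<^sup>2)
      = (vinner f1 f1 - (\<Sum>i<5. (vinner f1 (E m1 n10 i))\<^sup>2)) + (vinner f2 f2 - (\<Sum>i<5. (vinner f2 (E m2 n20 i))\<^sup>2))"
    unfolding Pk_form using S1 S2 by (simp add: power2_eq_square)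
qed

definition Bc1 :: "real \<Rightarrow> real \<Rightarrow> nat \<Rightarrow> nat \<Rightarrow> real" where
  "Bc1 m n k i = (if k = 0 \<and> i = 0 then sqrt n
     else if (k = 2 \<or> k = 3 \<or> k = 4) \<and> i = k - 1 then sqrt (m * n)
     else if k = 5 \<and> i = 4 then sqrt 6 * sqrt n else 0)"

definition Bc2 :: "real \<Rightarrow> real \<Rightarrow> nat \<Rightarrow> nat \<Rightarrow> real" where
  "Bc2 m n k i = (if k = 1 \<and> i = 0 then sqrt n
     else if (k = 2 \<or> k = 3 \<or> k = 4) \<and> i = k - 1 then sqrt (m * n)
     else if k = 5 \<and> i = 4 then sqrt 6 * sqrt n else 0)"

lemma sum6: "(\<Sum>i<(6::nat). h i) = h 0 + h 1 + h 2 + h 3 + h 4 + (h 5 :: real)"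
  by (simp add: eval_nat_numeral)

lemma sqrt_mn: assumes "m > 0" "n > 0" shows "sqrt (m * n) * sqrt (m / n) = m"
proof -
  have "sqrt (m * n) * sqrt (m / n) = sqrt (m * n * (m / n))" by (rule real_sqrt_mult[symmetric])
  also have "m * n * (m / n) = m\<^sup>2" using assms by (simp add: power2_eq_square)
  finally show ?thesis using assms by simp
qed

lemma Bvec_fst:
  assumes "m1 > 0" "n10 > 0" "k < 6"
  shows "fst (Bvec m1 m2 n10 n20 k) = (\<lambda>v. \<Sum>i<5. Bc1 m1 n10 k i * E m1 n10 i v)"
proof -
  have k: "k = 0 \<or> k = 1 \<or> k = 2 \<or> k = 3 \<or> k = 4 \<or> k = 5" using assms by auto
  have s: "sqrt (m1 * n10) * sqrt (m1 / n10) = m1" using sqrt_mn assms by auto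
  have s6: "sqrt 6 * sqrt n10 * (x / sqrt (6 * n10)) = x" "sqrt 6 * (sqrt n10 * x) / sqrt (6 * n10) = x" for x
    using assms by (simp_all add: real_sqrt_mult)
  show ?thesis using k
    apply (elim disjE)
    apply (simp_all add: Bvec_def Bc1_def sum5 E_def e1_def emom_def e5_def fun_eq_iff)
    using assms apply (simp_all add: mult.assoc[symmetric] s)
    apply (simp_all add: mult.assoc s6)
    done
qed

lemma Bvec_snd:
  assumes "m2 > 0" "n20 > 0" "k < 6"
  shows "snd (Bvec m1 m2 n10 n20 k) = (\<lambda>v. \<Sum>i<5. Bc2 m2 n20 k i * E m2 n20 i v)"
proof -
  have k: "k = 0 \<or> k = 1 \<or> k = 2 \<or> k = 3 \<or> k = 4 \<or> k = 5" using assms by auto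
  have s: "sqrt (m2 * n20) * sqrt (m2 / n20) = m2" using sqrt_mn assms by auto
  have s6: "sqrt 6 * sqrt n20 * (x / sqrt (6 * n20)) = x" "sqrt 6 * (sqrt n20 * x) / sqrt (6 * n20) = x" for x
    using assms by (simp_all add: real_sqrt_mult)
  show ?thesis using k
    apply (elim disjE)
    apply (simp_all add: Bvec_def Bc2_def sum5 E_def e1_def emom_def e5_def fun_eq_iff)
    using assms apply (simp_all add: mult.assoc[symmetric] s)
    apply (simp_all add: mult.assoc s6)
    done
qed

lemma lin1: "p \<noteq> 0 \<Longrightarrow> (p * (x - c * p) = 0) \<longleftrightarrow> c = x / (p::real)"
  by (auto simp: field_simps)

lemma lin2: "p\<^sup>2 + q\<^sup>2 \<noteq> 0 \<Longrightarrow> (p * (x - c * p) + q * (y - c * q) = 0) \<longleftrightarrow> c = (p * x + q * y) / (p\<^sup>2 + (q::real)\<^sup>2)"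
  by (auto simp: field_simps power2_eq_square)

lemma scale_frac:
  fixes s x y a b :: real
  assumes "s \<noteq> 0"
  shows "(s * z) * ((s * x) * a + (s * y) * b) / ((s * x)\<^sup>2 + (s * y)\<^sup>2) = z * (x * a + y * b) / (x\<^sup>2 + y\<^sup>2)"
proof -
  have 1: "(s * z) * ((s * x) * a + (s * y) * b) = s\<^sup>2 * (z * (x * a + y * b))"
    by (simp add: power2_eq_square algebra_simps)
  have 2: "(s * x)\<^sup>2 + (s * y)\<^sup>2 = s\<^sup>2 * (x\<^sup>2 + y\<^sup>2)"
    by (simp add: power2_eq_square algebra_simps)
  show ?thesis unfolding 1 2 using assms by simp
qed

lemma Pbig_eq:
  assumes pos: "m1 > 0" "m2 > 0" "n10 > 0" "n20 > 0" and f: "sqi f1" "sqi f2"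
  defines "a \<equiv> (\<lambda>i. vinner f1 (E m1 n10 i))" and "b \<equiv> (\<lambda>i. vinner f2 (E m2 n20 i))"
  shows "Pbig m1 m2 n10 n20 (f1, f2) =
     ((\<lambda>v. \<Sum>i<5. alc m1 m2 n10 n20 a b i * E m1 n10 i v), (\<lambda>v. \<Sum>i<5. bec m1 m2 n10 n20 a b i * E m2 n20 i v))"
proof -
  define B where "B = Bvec m1 m2 n10 n20"
  define Gc where "Gc c = ((\<lambda>v. \<Sum>i<6. c i * fst (B i) v), (\<lambda>v. \<Sum>i<6. c i * snd (B i) v))" for c :: "nat \<Rightarrow> real"
  define al where "al c i = (\<Sum>k<6. c k * Bc1 m1 n10 k i)" for c :: "nat \<Rightarrow> real" and i
  define be where "be c i = (\<Sum>k<6. c k * Bc2 m2 n20 k i)" for c :: "nat \<Rightarrow> real" and i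
  have GcE: "Gc c = ((\<lambda>v. \<Sum>i<5. al c i * E m1 n10 i v), (\<lambda>v. \<Sum>i<5. be c i * E m2 n20 i v))" for c
  proof -
    have "(\<lambda>v. \<Sum>k<6. c k * fst (B k) v) = (\<lambda>v. \<Sum>k<6. c k * (\<Sum>i<5. Bc1 m1 n10 k i * E m1 n10 i v))"
      by (rule ext, rule sum.cong[OF refl]) (simp add: B_def Bvec_fst pos)
    also have "\<dots> = (\<lambda>v. \<Sum>i<5. al c i * E m1 n10 i v)"
      unfolding al_def by (rule ext) (simp add: sum_distrib_left sum_distrib_right mult.assoc, rule sum.swap)
    finally have 1: "(\<lambda>v. \<Sum>k<6. c k * fst (B k) v) = (\<lambda>v. \<Sum>i<5. al c i * E m1 n10 i v)" .
    have "(\<lambda>v. \<Sum>k<6. c k * snd (B k) v) = (\<lambda>v. \<Sum>k<6. c k * (\<Sum>i<5. Bc2 m2 n20 k i * E m2 n20 i v))"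
      by (rule ext, rule sum.cong[OF refl]) (simp add: B_def Bvec_snd pos)
    also have "\<dots> = (\<lambda>v. \<Sum>i<5. be c i * E m2 n20 i v)"
      unfolding be_def by (rule ext) (simp add: sum_distrib_left sum_distrib_right mult.assoc, rule sum.swap)
    finally have 2: "(\<lambda>v. \<Sum>k<6. c k * snd (B k) v) = (\<lambda>v. \<Sum>i<5. be c i * E m2 n20 i v)" .
    show ?thesis unfolding Gc_def 1 2 ..
  qed
  have condE: "vinner2 ((\<lambda>v. f1 v - fst (Gc c) v), (\<lambda>v. f2 v - snd (Gc c) v)) (B k)
     = (\<Sum>i<5. Bc1 m1 n10 k i * (a i - al c i)) + (\<Sum>i<5. Bc2 m2 n20 k i * (b i - be c i))"
    if k: "k < 6" for c k
    unfolding vinner2_def GcE using k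
    by (simp add: B_def Bvec_fst Bvec_snd pos vinner_res[OF pos(1,3) f(1)] vinner_res[OF pos(2,4) f(2)] a_def b_def)
  have alv: "al c 0 = c 0 * sqrt n10" "al c 1 = c 2 * sqrt (m1 * n10)" "al c 2 = c 3 * sqrt (m1 * n10)"
      "al c 3 = c 4 * sqrt (m1 * n10)" "al c 4 = c 5 * (sqrt 6 * sqrt n10)" for c
    unfolding al_def sum6 Bc1_def by simp_all
  have bev: "be c 0 = c 1 * sqrt n20" "be c 1 = c 2 * sqrt (m2 * n20)" "be c 2 = c 3 * sqrt (m2 * n20)"
      "be c 3 = c 4 * sqrt (m2 * n20)" "be c 4 = c 5 * (sqrt 6 * sqrt n20)" for c
    unfolding be_def sum6 Bc2_def by simp_all
  have alv1: "al c (Suc 0) = c 2 * sqrt (m1 * n10)" "be c (Suc 0) = c 2 * sqrt (m2 * n20)" for c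
    using alv(2) bev(2) by simp_all
  define p where "p = sqrt (m1 * n10)"
  define q where "q = sqrt (m2 * n20)"
  define p6 where "p6 = sqrt 6 * sqrt n10"
  define q6 where "q6 = sqrt 6 * sqrt n20"
  have pos2: "0 < m1 * n10 + m2 * n20" "0 < 6 * n10 + 6 * n20" using pos by (simp_all add: add_pos_pos)
  have pq: "p\<^sup>2 + q\<^sup>2 \<noteq> 0" "p6\<^sup>2 + q6\<^sup>2 \<noteq> 0" "sqrt n10 \<noteq> 0" "sqrt n20 \<noteq> 0"
    unfolding p_def q_def p6_def q6_def using pos pos2 by (simp_all add: power_mult_distrib)
  define cs where "cs k = (if k = 0 then a 0 / sqrt n10 else if k = 1 then b 0 / sqrt n20
      else if k = 2 \<or> k = 3 \<or> k = 4 then (p * a (k - 1) + q * b (k - 1)) / (p\<^sup>2 + q\<^sup>2)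
      else (p6 * a 4 + q6 * b 4) / (p6\<^sup>2 + q6\<^sup>2))" for k
  have condiff: "(vinner2 ((\<lambda>v. f1 v - fst (Gc c) v), (\<lambda>v. f2 v - snd (Gc c) v)) (B k) = 0) \<longleftrightarrow> c k = cs k"
    if k: "k < 6" for c k
  proof -
    have k6: "k = 0 \<or> k = 1 \<or> k = 2 \<or> k = 3 \<or> k = 4 \<or> k = 5" using k by auto
    show ?thesis unfolding condE[OF k] using k6
      apply (elim disjE)
      apply (simp_all add: sum5 Bc1_def Bc2_def alv bev alv1 cs_def)
      apply (simp_all only: p_def[symmetric] q_def[symmetric] p6_def[symmetric] q6_def[symmetric])
      apply (simp_all only: lin2[OF pq(1)] lin2[OF pq(2)] mult.assoc)
      using pq apply (auto simp: field_simps)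
      done
  qed
  define Pr where "Pr g = ((\<exists>c. g = Gc c) \<and> (\<forall>i<6. vinner2 ((\<lambda>v. f1 v - fst g v), (\<lambda>v. f2 v - snd g v)) (B i) = 0))" for g
  have Pb: "Pbig m1 m2 n10 n20 (f1, f2) = (THE g. Pr g)"
    unfolding Pbig_def Pr_def Gc_def B_def by simp
  have Gc_cong: "(\<forall>k<6. c k = d k) \<Longrightarrow> Gc c = Gc d" for c d
    unfolding Gc_def by (auto intro!: sum.cong)
  have "(THE g. Pr g) = Gc cs"
  proof (rule the_equality)
    show "Pr (Gc cs)" unfolding Pr_def using condiff by auto
  next
    fix g assume "Pr g"
    then obtain c where g: "g = Gc c" and cond: "\<forall>i<6. vinner2 ((\<lambda>v. f1 v - fst g v), (\<lambda>v. f2 v - snd g v)) (B i) = 0"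
      unfolding Pr_def by auto
    have "\<forall>k<6. c k = cs k" using cond condiff unfolding g by auto
    then show "g = Gc cs" unfolding g by (rule Gc_cong)
  qed
  moreover have "al cs i = alc m1 m2 n10 n20 a b i" "be cs i = bec m1 m2 n10 n20 a b i" if i: "i < 5" for i
  proof -
    have i5: "i = 0 \<or> i = 1 \<or> i = 2 \<or> i = 3 \<or> i = 4" using i by auto
    have sqp: "p * p = m1 * n10" "q * q = m2 * n20" "p6 * p6 = 6 * n10" "q6 * q6 = 6 * n20"
      "p6 * q6 = 6 * (sqrt n10 * sqrt n20)"
      unfolding p_def q_def p6_def q6_def using pos by (simp_all add: mult_ac)
    have n0: "sqrt n10 * sqrt n10 = n10" "sqrt n20 * sqrt n20 = n20" using pos by simp_all
    have al4: "al cs 4 = alc m1 m2 n10 n20 a b 4"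
    proof -
      have "al cs 4 = p6 * (p6 * a 4 + q6 * b 4) / (p6\<^sup>2 + q6\<^sup>2)"
        by (simp add: alv cs_def p6_def)
      also have "\<dots> = sqrt n10 * (sqrt n10 * a 4 + sqrt n20 * b 4) / ((sqrt n10)\<^sup>2 + (sqrt n20)\<^sup>2)"
        unfolding p6_def q6_def by (rule scale_frac) simp
      also have "\<dots> = alc m1 m2 n10 n20 a b 4" using pos by (simp add: alc_def)
      finally show ?thesis .
    qed
    have be4: "be cs 4 = bec m1 m2 n10 n20 a b 4"
    proof -
      have "be cs 4 = q6 * (p6 * a 4 + q6 * b 4) / (p6\<^sup>2 + q6\<^sup>2)"
        by (simp add: bev cs_def q6_def)
      also have "\<dots> = sqrt n20 * (sqrt n10 * a 4 + sqrt n20 * b 4) / ((sqrt n10)\<^sup>2 + (sqrt n20)\<^sup>2)"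
        unfolding p6_def q6_def by (rule scale_frac) simp
      also have "\<dots> = bec m1 m2 n10 n20 a b 4" using pos by (simp add: bec_def)
      finally show ?thesis .
    qed
    show "al cs i = alc m1 m2 n10 n20 a b i"
    proof (cases "i = 4")
      case True then show ?thesis using al4 by simp
    next
      case False
      then have "i = 0 \<or> i = 1 \<or> i = 2 \<or> i = 3" using i by auto
      then show ?thesis
        apply (elim disjE)
        apply (simp_all add: alv alv1 cs_def alc_def)
        apply (simp_all only: p_def[symmetric] q_def[symmetric])
        using pq pos pos2 apply (auto simp: field_simps sqp n0 power2_eq_square)
        done
    qed
    show "be cs i = bec m1 m2 n10 n20 a b i"
    proof (cases "i = 4")
      case True then show ?thesis using be4 by simp
    next
      case False
      then have "i = 0 \<or> i = 1 \<or> i = 2 \<or> i = 3" using i by auto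
      then show ?thesis
        apply (elim disjE)
        apply (simp_all add: bev alv1 cs_def bec_def)
        apply (simp_all only: p_def[symmetric] q_def[symmetric])
        using pq pos pos2 apply (auto simp: field_simps sqp n0 power2_eq_square)
        done
    qed
  qed
  ultimately show ?thesis unfolding Pb GcE by (auto intro!: sum.cong)
qed

lemma Bterm:
  assumes pos: "m1 > 0" "m2 > 0" "n10 > 0" "n20 > 0" and f: "sqi f1" "sqi f2"
  defines "a \<equiv> (\<lambda>i. vinner f1 (E m1 n10 i))" and "b \<equiv> (\<lambda>i. vinner f2 (E m2 n20 i))"
  shows "integrable lborel (\<lambda>v. (f1 v - fst (Pbig m1 m2 n10 n20 (f1, f2)) v)\<^sup>2 + (f2 v - snd (Pbig m1 m2 n10 n20 (f1, f2)) v)\<^sup>2)"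
    "(LINT v|lborel. (f1 v - fst (Pbig m1 m2 n10 n20 (f1, f2)) v)\<^sup>2 + (f2 v - snd (Pbig m1 m2 n10 n20 (f1, f2)) v)\<^sup>2)
      = (vinner f1 f1 - 2 * (\<Sum>i<5. alc m1 m2 n10 n20 a b i * a i) + (\<Sum>i<5. (alc m1 m2 n10 n20 a b i)\<^sup>2))
      + (vinner f2 f2 - 2 * (\<Sum>i<5. bec m1 m2 n10 n20 a b i * b i) + (\<Sum>i<5. (bec m1 m2 n10 n20 a b i)\<^sup>2))"
proof -
  note PB = Pbig_eq[OF pos f]
  note S1 = sq_res[OF pos(1,3) f(1), of "alc m1 m2 n10 n20 a b"]
  note S2 = sq_res[OF pos(2,4) f(2), of "bec m1 m2 n10 n20 a b"]
  show "integrable lborel (\<lambda>v. (f1 v - fst (Pbig m1 m2 n10 n20 (f1, f2)) v)\<^sup>2 + (f2 v - snd (Pbig m1 m2 n10 n20 (f1, f2)) v)\<^sup>2)"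
    unfolding PB using S1(1) S2(1) by (simp add: a_def b_def)
  show "(LINT v|lborel. (f1 v - fst (Pbig m1 m2 n10 n20 (f1, f2)) v)\<^sup>2 + (f2 v - snd (Pbig m1 m2 n10 n20 (f1, f2)) v)\<^sup>2)
      = (vinner f1 f1 - 2 * (\<Sum>i<5. alc m1 m2 n10 n20 a b i * a i) + (\<Sum>i<5. (alc m1 m2 n10 n20 a b i)\<^sup>2))
      + (vinner f2 f2 - 2 * (\<Sum>i<5. bec m1 m2 n10 n20 a b i * b i) + (\<Sum>i<5. (bec m1 m2 n10 n20 a b i)\<^sup>2))"
    unfolding PB using S1 S2 by (simp add: a_def b_def)
qed

lemma PW:
  assumes "m1 \<ge> m2" "m2 > 0" "n10 > 0" "n20 > 0"
    and "0 \<le> \<delta>" "\<delta> < 1" "0 \<le> \<omega>" "\<omega> < 1" and f: "sqi f1" "sqi f2"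
  shows "(LINT v|lborel. fst (Lop m1 m2 n10 n20 \<delta> \<omega> f1 f2) v * f1 v + snd (Lop m1 m2 n10 n20 \<delta> \<omega> f1 f2) v * f2 v)
    \<le> - (n10 + n20) * (max \<delta> \<omega> * (LINT v|lborel. (f1 v - Pk m1 n10 f1 v)\<^sup>2 + (f2 v - Pk m2 n20 f2 v)\<^sup>2)
        + min (1 - \<delta>) (1 - \<omega>) * (LINT v|lborel. (f1 v - fst (Pbig m1 m2 n10 n20 (f1, f2)) v)\<^sup>2
                                              + (f2 v - snd (Pbig m1 m2 n10 n20 (f1, f2)) v)\<^sup>2))"
proof -
  have pos: "m1 > 0" "m2 > 0" "n10 > 0" "n20 > 0" using assms by auto
  show ?thesis
    unfolding ell(2)[OF pos f] Aterm(2)[OF pos f] Bterm(2)[OF pos f]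
    by (rule assemble[OF assms(1-8)])
qed

lemma bessel:
  assumes phi: "sqi \<phi>" and e: "sqi e" and e1: "(LINT v|lborel. (e v)\<^sup>2) = 1"
  shows "(vinner \<phi> e)\<^sup>2 \<le> vinner \<phi> \<phi>"
proof -
  define A where "A = vinner \<phi> e"
  have i1: "integrable lborel (\<lambda>v. (\<phi> v)\<^sup>2)" "integrable lborel (\<lambda>v. (e v)\<^sup>2)"
    using phi e unfolding sqi_def by auto
  have i2: "integrable lborel (\<lambda>v. \<phi> v * e v)" by (rule sqi_mult_int[OF phi e])
  have eq: "(\<lambda>v. (\<phi> v - A * e v)\<^sup>2) = (\<lambda>v. (\<phi> v)\<^sup>2 - 2 * A * (\<phi> v * e v) + A\<^sup>2 * (e v)\<^sup>2)"
    by (simp add: power2_eq_square algebra_simps)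
  have "0 \<le> (LINT v|lborel. (\<phi> v - A * e v)\<^sup>2)" by simp
  also have "\<dots> = vinner \<phi> \<phi> - 2 * A * A + A\<^sup>2 * 1"
    unfolding eq using i1 i2 e1 by (simp add: vinner_sq A_def vinner_def)
  finally show ?thesis unfolding A_def by (simp add: power2_eq_square)
qed

lemma amgm: "\<bar>x\<bar> * y \<le> (x\<^sup>2 + y\<^sup>2) / 2" for x y :: real
proof -
  have "0 \<le> (\<bar>x\<bar> - y)\<^sup>2" by simp
  then show ?thesis by (simp add: power2_eq_square algebra_simps)
qed

lemma sqi_abs: "sqi e \<Longrightarrow> sqi (\<lambda>v. \<bar>e v\<bar>)"
  unfolding sqi_def by auto

lemma GI:
  fixes h g :: "(real^3) \<times> (real^3) \<Rightarrow> real" and e e' :: "real^3 \<Rightarrow> real"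
  assumes hm[measurable]: "h \<in> borel_measurable (lborel \<Otimes>\<^sub>M lborel)"
    and hi: "integrable (lborel \<Otimes>\<^sub>M lborel) (\<lambda>z. (h z)\<^sup>2)"
    and gm[measurable]: "g \<in> borel_measurable (lborel \<Otimes>\<^sub>M lborel)"
    and gi: "integrable (lborel \<Otimes>\<^sub>M lborel) (\<lambda>z. (g z)\<^sup>2)"
    and e: "sqi e" "(LINT v|lborel. (e v)\<^sup>2) = 1"
    and e': "sqi e'" "(LINT v|lborel. (e' v)\<^sup>2) = 1"
  shows "integrable (lborel \<Otimes>\<^sub>M lborel) (\<lambda>z. vinner (\<lambda>v. h (fst z, v)) e' * e (snd z) * g z)"
proof -
  have em[measurable]: "e \<in> borel_measurable lborel" "e' \<in> borel_measurable lborel"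
    using e e' unfolding sqi_def by auto
  define A where "A x = vinner (\<lambda>v. h (x, v)) e'" for x
  have Am[measurable]: "A \<in> borel_measurable lborel"
    unfolding A_def vinner_def by measurable
  define F where "F z = A (fst z) * e (snd z) * g z" for z
  have Fm[measurable]: "F \<in> borel_measurable (lborel \<Otimes>\<^sub>M lborel)" unfolding F_def by measurable
  have AEg: "AE x in lborel. integrable lborel (\<lambda>v. (g (x, v))\<^sup>2)"
    using lborel_pair.AE_integrable_fst'[OF gi] by simp
  have AEh: "AE x in lborel. integrable lborel (\<lambda>v. (h (x, v))\<^sup>2)"
    using lborel_pair.AE_integrable_fst'[OF hi] by simp
  have sg: "sqi (\<lambda>v. g (x, v))" if "integrable lborel (\<lambda>v. (g (x, v))\<^sup>2)" for x
    unfolding sqi_def using that measurable_Pair2[OF gm, of x] by simp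
  have sh: "sqi (\<lambda>v. h (x, v))" if "integrable lborel (\<lambda>v. (h (x, v))\<^sup>2)" for x
    unfolding sqi_def using that measurable_Pair2[OF hm, of x] by simp
  have Hint: "integrable lborel (\<lambda>x. LINT v|lborel. (h (x, v))\<^sup>2)"
    using lborel_pair.integrable_fst'[OF hi] by simp
  have Gint: "integrable lborel (\<lambda>x. LINT v|lborel. (g (x, v))\<^sup>2)"
    using lborel_pair.integrable_fst'[OF gi] by simp
  have FF: "(\<lambda>z. vinner (\<lambda>v. h (fst z, v)) e' * e (snd z) * g z) = F"
    unfolding F_def A_def ..
  show ?thesis
    unfolding FF
  proof (rule lborel_pair.Fubini_integrable)
    show "F \<in> borel_measurable (lborel \<Otimes>\<^sub>M lborel)" by (rule Fm)
    show "AE x in lborel. integrable lborel (\<lambda>y. F (x, y))"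
      using AEg
    proof eventually_elim
      case (elim x)
      then have "integrable lborel (\<lambda>v. e v * g (x, v))" using sqi_mult_int[OF e(1) sg] by blast
      then show ?case
        unfolding F_def by (simp add: mult.assoc)
    qed
    show "integrable lborel (\<lambda>x. LINT y|lborel. norm (F (x, y)))"
    proof (rule Bochner_Integration.integrable_bound)
      show "integrable lborel (\<lambda>x. ((LINT v|lborel. (h (x, v))\<^sup>2) + (LINT v|lborel. (g (x, v))\<^sup>2)) / 2)"
        using Hint Gint by auto
      show "(\<lambda>x. LINT y|lborel. norm (F (x, y))) \<in> borel_measurable lborel"
        by measurable
      show "AE x in lborel. norm (LINT y|lborel. norm (F (x, y)))
          \<le> norm (((LINT v|lborel. (h (x, v))\<^sup>2) + (LINT v|lborel. (g (x, v))\<^sup>2)) / 2)"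
        using AEg AEh
      proof eventually_elim
        case (elim x)
        have shx: "sqi (\<lambda>v. h (x, v))" and sgx: "sqi (\<lambda>v. g (x, v))" using sh sg elim by auto
        define I where "I = (LINT v|lborel. \<bar>e v\<bar> * \<bar>g (x, v)\<bar>)"
        have I0: "0 \<le> I" unfolding I_def by simp
        have eqI: "(LINT y|lborel. norm (F (x, y))) = \<bar>A x\<bar> * I"
          unfolding F_def I_def by (simp add: abs_mult mult.assoc)
        have A2: "(A x)\<^sup>2 \<le> (LINT v|lborel. (h (x, v))\<^sup>2)"
          using bessel[OF shx e'] unfolding A_def by (simp add: vinner_sq)
        have I2: "I\<^sup>2 \<le> (LINT v|lborel. (g (x, v))\<^sup>2)"
        proof -
          have "(vinner (\<lambda>v. \<bar>g (x, v)\<bar>) (\<lambda>v. \<bar>e v\<bar>))\<^sup>2 \<le> vinner (\<lambda>v. \<bar>g (x, v)\<bar>) (\<lambda>v. \<bar>g (x, v)\<bar>)"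
            by (rule bessel[OF sqi_abs[OF sgx] sqi_abs[OF e(1)]]) (use e(2) in simp)
          then show ?thesis unfolding I_def vinner_def by (simp add: mult.commute abs_mult_self_eq power2_eq_square)
        qed
        have nn: "0 \<le> (LINT v|lborel. (h (x, v))\<^sup>2)" "0 \<le> (LINT v|lborel. (g (x, v))\<^sup>2)" by simp_all
        have "\<bar>A x\<bar> * I \<le> ((A x)\<^sup>2 + I\<^sup>2) / 2" by (rule amgm)
        also have "\<dots> \<le> ((LINT v|lborel. (h (x, v))\<^sup>2) + (LINT v|lborel. (g (x, v))\<^sup>2)) / 2"
          using A2 I2 by simp
        finally show ?case unfolding eqI using I0 nn by simp
      qed
    qed
  qed
qed

lemma K1c_lin: "K1c m1 m2 n10 n20 \<delta> \<omega> a b i =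
   ((n10 + n20) - n20 * (if i \<in> {1,2,3} then 1 - \<delta> else if i = 4 then 1 - \<omega> else 0)) * a i
 + (n20 * (if i \<in> {1,2,3} then (1 - \<delta>) * (sqrt (n10 / n20) * sqrt (m1 / m2)) else if i = 4 then (1 - \<omega>) * sqrt (n10 / n20) else 0)) * b i"
  unfolding K1c_def by (auto simp: algebra_simps)

lemma K2c_lin: "K2c m1 m2 n10 n20 \<delta> \<omega> a b i =
   (n10 * (if i \<in> {1,2,3} then m1 / m2 * (1 - \<delta>) * (sqrt (n20 / n10) * sqrt (m2 / m1)) else if i = 4 then (1 - \<omega>) * sqrt (n20 / n10) else 0)) * a i
 + ((n10 + n20) - n10 * (if i \<in> {1,2,3} then m1 / m2 * (1 - \<delta>) else if i = 4 then 1 - \<omega> else 0)) * b i"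
  unfolding K2c_def by (auto simp: algebra_simps)

lemma E_norm: "m > 0 \<Longrightarrow> n > 0 \<Longrightarrow> i < 5 \<Longrightarrow> (LINT v|lborel. (E m n i v)\<^sup>2) = 1"
  using ON(2)[of m n i i] by (simp add: vinner_sq)

lemma Hint:
  fixes g1 g2 :: "(real^3) \<times> (real^3) \<Rightarrow> real"
  assumes pos: "m1 > 0" "m2 > 0" "n10 > 0" "n20 > 0"
    and g1m: "g1 \<in> borel_measurable (lborel \<Otimes>\<^sub>M lborel)" and g1i: "integrable (lborel \<Otimes>\<^sub>M lborel) (\<lambda>z. (g1 z)\<^sup>2)"
    and g2m: "g2 \<in> borel_measurable (lborel \<Otimes>\<^sub>M lborel)" and g2i: "integrable (lborel \<Otimes>\<^sub>M lborel) (\<lambda>z. (g2 z)\<^sup>2)"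
  shows "integrable (lborel \<Otimes>\<^sub>M lborel) (\<lambda>z.
            fst (Lop m1 m2 n10 n20 \<delta> \<omega> (\<lambda>v. g1 (fst z, v)) (\<lambda>v. g2 (fst z, v))) (snd z) * g1 z
          + snd (Lop m1 m2 n10 n20 \<delta> \<omega> (\<lambda>v. g1 (fst z, v)) (\<lambda>v. g2 (fst z, v))) (snd z) * g2 z)"
proof -
  define L1 where "L1 i = ((n10 + n20) - n20 * (if i \<in> {1,2,3} then 1 - \<delta> else if i = 4 then 1 - \<omega> else 0))" for i :: nat
  define L2 where "L2 i = (n20 * (if i \<in> {1,2,3} then (1 - \<delta>) * (sqrt (n10 / n20) * sqrt (m1 / m2)) else if i = 4 then (1 - \<omega>) * sqrt (n10 / n20) else 0))" for i :: nat
  define M1 where "M1 i = (n10 * (if i \<in> {1,2,3} then m1 / m2 * (1 - \<delta>) * (sqrt (n20 / n10) * sqrt (m2 / m1)) else if i = 4 then (1 - \<omega>) * sqrt (n20 / n10) else 0))" for i :: nat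
  define M2 where "M2 i = ((n10 + n20) - n10 * (if i \<in> {1,2,3} then m1 / m2 * (1 - \<delta>) else if i = 4 then 1 - \<omega> else 0))" for i :: nat
  define T where "T g h e e' z = vinner (\<lambda>v. h (fst z, v)) e' * e (snd z) * g z" for g h :: "(real^3) \<times> (real^3) \<Rightarrow> real" and e e' :: "real^3 \<Rightarrow> real" and z
  have TI: "integrable (lborel \<Otimes>\<^sub>M lborel) (T g h (E m n i) (E m' n' j))"
    if "g = g1 \<or> g = g2" "h = g1 \<or> h = g2" "m > 0" "n > 0" "m' > 0" "n' > 0" "i < 5" "j < 5" for g h m n m' n' i j
  proof -
    have gm: "g \<in> borel_measurable (lborel \<Otimes>\<^sub>M lborel)" "integrable (lborel \<Otimes>\<^sub>M lborel) (\<lambda>z. (g z)\<^sup>2)"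
      using that g1m g1i g2m g2i by auto
    have hm: "h \<in> borel_measurable (lborel \<Otimes>\<^sub>M lborel)" "integrable (lborel \<Otimes>\<^sub>M lborel) (\<lambda>z. (h z)\<^sup>2)"
      using that g1m g1i g2m g2i by auto
    show ?thesis unfolding T_def
      by (rule GI[OF hm gm sqi_E E_norm sqi_E E_norm]) (use that in auto)
  qed
  have eq: "(\<lambda>z. fst (Lop m1 m2 n10 n20 \<delta> \<omega> (\<lambda>v. g1 (fst z, v)) (\<lambda>v. g2 (fst z, v))) (snd z) * g1 z
          + snd (Lop m1 m2 n10 n20 \<delta> \<omega> (\<lambda>v. g1 (fst z, v)) (\<lambda>v. g2 (fst z, v))) (snd z) * g2 z)
     = (\<lambda>z. (\<Sum>i<5. L1 i * T g1 g1 (E m1 n10 i) (E m1 n10 i) z + L2 i * T g1 g2 (E m1 n10 i) (E m2 n20 i) z)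
            - (n10 + n20) * (g1 z)\<^sup>2
          + ((\<Sum>i<5. M1 i * T g2 g1 (E m2 n20 i) (E m1 n10 i) z + M2 i * T g2 g2 (E m2 n20 i) (E m2 n20 i) z)
            - (n10 + n20) * (g2 z)\<^sup>2))"
    unfolding Lop_fst Lop_snd K1c_lin K2c_lin L1_def[symmetric] L2_def[symmetric] M1_def[symmetric] M2_def[symmetric]
    by (rule ext) (simp add: T_def sum_distrib_right sum_distrib_left algebra_simps power2_eq_square)
  show ?thesis unfolding eq
    using pos g1i g2i
    by (intro Bochner_Integration.integrable_add Bochner_Integration.integrable_diff
          Bochner_Integration.integrable_sum integrable_mult_right TI) auto
qed

lemma main_g:
  fixes m1 m2 n10 n20 \<delta> \<omega> :: real
    and g1 g2 :: "(real^3) \<times> (real^3) \<Rightarrow> real"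
  assumes prm: "m1 \<ge> m2" "m2 > 0" "n10 > 0" "n20 > 0"
    "0 \<le> \<delta>" "\<delta> < 1" "0 \<le> \<omega>" "\<omega> < 1"
    and g1m[measurable]: "g1 \<in> borel_measurable (lborel \<Otimes>\<^sub>M lborel)" and g1i: "integrable (lborel \<Otimes>\<^sub>M lborel) (\<lambda>z. (g1 z)\<^sup>2)"
    and g2m[measurable]: "g2 \<in> borel_measurable (lborel \<Otimes>\<^sub>M lborel)" and g2i: "integrable (lborel \<Otimes>\<^sub>M lborel) (\<lambda>z. (g2 z)\<^sup>2)"
  shows "(LINT z:torus_dom|lborel.
            fst (Lop m1 m2 n10 n20 \<delta> \<omega> (\<lambda>v. g1 (fst z, v)) (\<lambda>v. g2 (fst z, v))) (snd z) * g1 z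
          + snd (Lop m1 m2 n10 n20 \<delta> \<omega> (\<lambda>v. g1 (fst z, v)) (\<lambda>v. g2 (fst z, v))) (snd z) * g2 z)
    \<le> - (n10 + n20) *
        (max \<delta> \<omega> *
           (LINT z:torus_dom|lborel.
              (g1 z - Pk m1 n10 (\<lambda>v. g1 (fst z, v)) (snd z))\<^sup>2
            + (g2 z - Pk m2 n20 (\<lambda>v. g2 (fst z, v)) (snd z))\<^sup>2)
       + min (1 - \<delta>) (1 - \<omega>) *
           (LINT z:torus_dom|lborel.
              (g1 z - fst (Pbig m1 m2 n10 n20 ((\<lambda>v. g1 (fst z, v)), (\<lambda>v. g2 (fst z, v)))) (snd z))\<^sup>2
            + (g2 z - snd (Pbig m1 m2 n10 n20 ((\<lambda>v. g1 (fst z, v)), (\<lambda>v. g2 (fst z, v)))) (snd z))\<^sup>2))"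
proof -
  have pos: "m1 > 0" "m2 > 0" "n10 > 0" "n20 > 0" using prm by auto
  define C where "C = {x::real^3. \<forall>i. 0 \<le> x$i \<and> x$i \<le> 1}"
  have TD: "torus_dom = C \<times> UNIV" unfolding torus_dom_def C_def ..
  have C_cbox: "C = cbox 0 (\<chi> i. 1)" unfolding C_def by (auto simp: mem_box_cart)
  have Cm: "C \<in> sets (lborel :: (real^3) measure)" unfolding C_cbox by simp
  have TDm: "torus_dom \<in> sets (lborel \<Otimes>\<^sub>M lborel)" unfolding TD using Cm by (intro pair_measureI) auto
  have LP: "(lborel :: ((real^3) \<times> (real^3)) measure) = lborel \<Otimes>\<^sub>M lborel" by (rule lborel_prod[symmetric])
  define H where "H z = fst (Lop m1 m2 n10 n20 \<delta> \<omega> (\<lambda>v. g1 (fst z, v)) (\<lambda>v. g2 (fst z, v))) (snd z) * g1 z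
          + snd (Lop m1 m2 n10 n20 \<delta> \<omega> (\<lambda>v. g1 (fst z, v)) (\<lambda>v. g2 (fst z, v))) (snd z) * g2 z" for z
  define Af where "Af z = (g1 z - Pk m1 n10 (\<lambda>v. g1 (fst z, v)) (snd z))\<^sup>2
            + (g2 z - Pk m2 n20 (\<lambda>v. g2 (fst z, v)) (snd z))\<^sup>2" for z
  define Bf where "Bf z = (g1 z - fst (Pbig m1 m2 n10 n20 ((\<lambda>v. g1 (fst z, v)), (\<lambda>v. g2 (fst z, v)))) (snd z))\<^sup>2
            + (g2 z - snd (Pbig m1 m2 n10 n20 ((\<lambda>v. g1 (fst z, v)), (\<lambda>v. g2 (fst z, v)))) (snd z))\<^sup>2" for z
  define N where "N = n10 + n20"
  have Npos: "N > 0" unfolding N_def using pos by simp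
  have sl: "set_lebesgue_integral lborel torus_dom F = integral\<^sup>L (lborel \<Otimes>\<^sub>M lborel) (\<lambda>z. indicator torus_dom z * F z)" for F :: "(real^3) \<times> (real^3) \<Rightarrow> real"
    unfolding set_lebesgue_integral_def LP by (simp add: real_scaleR_def)
  have indsec: "(\<lambda>v. indicator torus_dom (x, v) * F (x, v)) = (\<lambda>v. indicator C x * F (x, v))" for F :: "(real^3) \<times> (real^3) \<Rightarrow> real" and x
    unfolding TD by (simp add: indicator_times)
  have fub: "integral\<^sup>L (lborel \<Otimes>\<^sub>M lborel) (\<lambda>z. indicator torus_dom z * F z) = (LINT x|lborel. indicator C x * (LINT v|lborel. F (x, v)))"
    "integrable lborel (\<lambda>x. indicator C x * (LINT v|lborel. F (x, v)))"
    if Fi: "integrable (lborel \<Otimes>\<^sub>M lborel) (\<lambda>z. indicator torus_dom z * F z)" for F :: "(real^3) \<times> (real^3) \<Rightarrow> real"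
  proof -
    have "integral\<^sup>L (lborel \<Otimes>\<^sub>M lborel) (\<lambda>z. indicator torus_dom z * F z)
        = (LINT x|lborel. (LINT v|lborel. indicator torus_dom (x, v) * F (x, v)))"
      using lborel_pair.integral_fst'[OF Fi] by simp
    also have "\<dots> = (LINT x|lborel. indicator C x * (LINT v|lborel. F (x, v)))"
      unfolding indsec by simp
    finally show "integral\<^sup>L (lborel \<Otimes>\<^sub>M lborel) (\<lambda>z. indicator torus_dom z * F z) = (LINT x|lborel. indicator C x * (LINT v|lborel. F (x, v)))" .
    show "integrable lborel (\<lambda>x. indicator C x * (LINT v|lborel. F (x, v)))"
      using lborel_pair.integrable_fst'[OF Fi] unfolding indsec by simp
  qed
  have indint: "integrable (lborel \<Otimes>\<^sub>M lborel) (\<lambda>z. indicator torus_dom z * F z)"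
    if "integrable (lborel \<Otimes>\<^sub>M lborel) F" for F :: "(real^3) \<times> (real^3) \<Rightarrow> real"
    using integrable_real_mult_indicator[OF TDm that] by (simp add: mult.commute)
  have Hi: "integrable (lborel \<Otimes>\<^sub>M lborel) H"
    unfolding H_def by (rule Hint[OF pos g1m g1i g2m g2i])
  define ell where "ell x = (LINT v|lborel. H (x, v))" for x
  define a where "a x = (LINT v|lborel. Af (x, v))" for x
  define b where "b x = (LINT v|lborel. Bf (x, v))" for x
  define IA where "IA = integrable (lborel \<Otimes>\<^sub>M lborel) (\<lambda>z. indicator torus_dom z * Af z)"
  define IB where "IB = integrable (lborel \<Otimes>\<^sub>M lborel) (\<lambda>z. indicator torus_dom z * Bf z)"
  define A' where "A' x = (if IA then indicator C x * a x else 0)" for x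
  define B' where "B' x = (if IB then indicator C x * b x else 0)" for x
  have Lval: "set_lebesgue_integral lborel torus_dom H = (LINT x|lborel. indicator C x * ell x)"
    and Lint: "integrable lborel (\<lambda>x. indicator C x * ell x)"
    unfolding sl ell_def using fub[OF indint[OF Hi]] by auto
  have Aval: "set_lebesgue_integral lborel torus_dom Af = (LINT x|lborel. A' x)"
    and Aint: "integrable lborel A'"
  proof -
    have "set_lebesgue_integral lborel torus_dom Af = (LINT x|lborel. A' x) \<and> integrable lborel A'"
    proof (cases IA)
      case True
      then show ?thesis unfolding sl A'_def a_def using fub[of Af] IA_def by simp
    next
      case False
      then show ?thesis unfolding sl A'_def using IA_def not_integrable_integral_eq by simp
    qed
    then show "set_lebesgue_integral lborel torus_dom Af = (LINT x|lborel. A' x)" "integrable lborel A'" by auto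
  qed
  have Bval: "set_lebesgue_integral lborel torus_dom Bf = (LINT x|lborel. B' x)"
    and Bint: "integrable lborel B'"
  proof -
    have "set_lebesgue_integral lborel torus_dom Bf = (LINT x|lborel. B' x) \<and> integrable lborel B'"
    proof (cases IB)
      case True
      then show ?thesis unfolding sl B'_def b_def using fub[of Bf] IB_def by simp
    next
      case False
      then show ?thesis unfolding sl B'_def using IB_def not_integrable_integral_eq by simp
    qed
    then show "set_lebesgue_integral lborel torus_dom Bf = (LINT x|lborel. B' x)" "integrable lborel B'" by auto
  qed
  define mx where "mx = max \<delta> \<omega>"
  define mn where "mn = min (1 - \<delta>) (1 - \<omega>)"
  have mxmn: "0 \<le> mx" "0 \<le> mn" unfolding mx_def mn_def using prm by auto
  have AEb: "AE x in lborel. indicator C x * ell x \<le> - N * (mx * A' x + mn * B' x)"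
    using lborel_pair.AE_integrable_fst'[OF g1i] lborel_pair.AE_integrable_fst'[OF g2i]
  proof eventually_elim
    case (elim x)
    have s1: "sqi (\<lambda>v. g1 (x, v))" unfolding sqi_def using elim measurable_Pair2[OF g1m, of x] by simp
    have s2: "sqi (\<lambda>v. g2 (x, v))" unfolding sqi_def using elim measurable_Pair2[OF g2m, of x] by simp
    have pw: "ell x \<le> - N * (mx * a x + mn * b x)"
      using PW[OF prm s1 s2] unfolding ell_def a_def b_def H_def Af_def Bf_def N_def mx_def mn_def by simp
    have a0: "0 \<le> a x" unfolding a_def Af_def by (intro integral_nonneg_AE) auto
    have b0: "0 \<le> b x" unfolding b_def Bf_def by (intro integral_nonneg_AE) auto
    show ?case
    proof (cases "x \<in> C")
      case True
      have "A' x \<le> a x" "B' x \<le> b x" unfolding A'_def B'_def using True a0 b0 by auto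
      then have "mx * A' x + mn * B' x \<le> mx * a x + mn * b x"
        using mxmn by (intro add_mono mult_left_mono) auto
      then have "- N * (mx * a x + mn * b x) \<le> - N * (mx * A' x + mn * B' x)"
        using Npos by simp
      then show ?thesis using pw True by simp
    next
      case False
      then show ?thesis unfolding A'_def B'_def by simp
    qed
  qed
  have "(LINT x|lborel. indicator C x * ell x) \<le> (LINT x|lborel. - N * (mx * A' x + mn * B' x))"
    by (rule integral_mono_AE[OF Lint _ AEb]) (use Aint Bint in auto)
  also have "\<dots> = - N * (mx * (LINT x|lborel. A' x) + mn * (LINT x|lborel. B' x))"
    using Aint Bint by simp
  finally have main: "set_lebesgue_integral lborel torus_dom H \<le> - N * (mx * set_lebesgue_integral lborel torus_dom Af + mn * set_lebesgue_integral lborel torus_dom Bf)"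
    unfolding Lval Aval Bval .
  show ?thesis using main unfolding H_def Af_def Bf_def N_def mx_def mn_def .
qed

theorem proposition3p1:
  fixes m1 m2 n10 n20 \<delta> \<omega> :: real
    and f1 f2 :: "(real^3) \<times> (real^3) \<Rightarrow> real"
  assumes "m1 \<ge> m2" "m2 > 0" "n10 > 0" "n20 > 0"
    and "0 \<le> \<delta>" "\<delta> < 1" "0 \<le> \<omega>" "\<omega> < 1"
    and "L2_tv f1" "L2_tv f2"
  shows "(LINT z:torus_dom|lborel.
            fst (Lop m1 m2 n10 n20 \<delta> \<omega> (\<lambda>v. f1 (fst z, v)) (\<lambda>v. f2 (fst z, v))) (snd z) * f1 z
          + snd (Lop m1 m2 n10 n20 \<delta> \<omega> (\<lambda>v. f1 (fst z, v)) (\<lambda>v. f2 (fst z, v))) (snd z) * f2 z)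
    \<le> - (n10 + n20) *
        (max \<delta> \<omega> *
           (LINT z:torus_dom|lborel.
              (f1 z - Pk m1 n10 (\<lambda>v. f1 (fst z, v)) (snd z))\<^sup>2
            + (f2 z - Pk m2 n20 (\<lambda>v. f2 (fst z, v)) (snd z))\<^sup>2)
       + min (1 - \<delta>) (1 - \<omega>) *
           (LINT z:torus_dom|lborel.
              (f1 z - fst (Pbig m1 m2 n10 n20 ((\<lambda>v. f1 (fst z, v)), (\<lambda>v. f2 (fst z, v)))) (snd z))\<^sup>2
            + (f2 z - snd (Pbig m1 m2 n10 n20 ((\<lambda>v. f1 (fst z, v)), (\<lambda>v. f2 (fst z, v)))) (snd z))\<^sup>2))"
proof -
  define C where "C = {x::real^3. \<forall>i. 0 \<le> x$i \<and> x$i \<le> 1}"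
  have TD: "torus_dom = C \<times> UNIV" unfolding torus_dom_def C_def ..
  have C_cbox: "C = cbox 0 (\<chi> i. 1)" unfolding C_def by (auto simp: mem_box_cart)
  have Cm: "C \<in> sets (lborel :: (real^3) measure)" unfolding C_cbox by simp
  have LP: "(lborel :: ((real^3) \<times> (real^3)) measure) = lborel \<Otimes>\<^sub>M lborel" by (rule lborel_prod[symmetric])
  have TDm: "torus_dom \<in> sets (lborel :: ((real^3) \<times> (real^3)) measure)"
    unfolding TD LP using Cm by (intro pair_measureI) auto
  define g1 where "g1 z = indicator torus_dom z * f1 z" for z
  define g2 where "g2 z = indicator torus_dom z * f2 z" for z
  have g1m: "g1 \<in> borel_measurable (lborel \<Otimes>\<^sub>M lborel)"
    using assms(9) unfolding L2_tv_def set_borel_measurable_def g1_def LP by simp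
  have g2m: "g2 \<in> borel_measurable (lborel \<Otimes>\<^sub>M lborel)"
    using assms(10) unfolding L2_tv_def set_borel_measurable_def g2_def LP by simp
  have sq1: "(\<lambda>z. (g1 z)\<^sup>2) = (\<lambda>z. indicator torus_dom z *\<^sub>R (f1 z)\<^sup>2)"
    by (auto simp: g1_def indicator_def fun_eq_iff)
  have sq2: "(\<lambda>z. (g2 z)\<^sup>2) = (\<lambda>z. indicator torus_dom z *\<^sub>R (f2 z)\<^sup>2)"
    by (auto simp: g2_def indicator_def fun_eq_iff)
  have g1i: "integrable (lborel \<Otimes>\<^sub>M lborel) (\<lambda>z. (g1 z)\<^sup>2)"
    using assms(9) unfolding L2_tv_def set_integrable_def sq1 LP by simp
  have g2i: "integrable (lborel \<Otimes>\<^sub>M lborel) (\<lambda>z. (g2 z)\<^sup>2)"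
    using assms(10) unfolding L2_tv_def set_integrable_def sq2 LP by simp
  have cong: "(LINT z:torus_dom|lborel. \<Phi> (\<lambda>v. f1 (fst z, v)) (\<lambda>v. f2 (fst z, v)) (snd z) (f1 z) (f2 z))
     = (LINT z:torus_dom|lborel. \<Phi> (\<lambda>v. g1 (fst z, v)) (\<lambda>v. g2 (fst z, v)) (snd z) (g1 z) (g2 z))"
    for \<Phi> :: "(real^3 \<Rightarrow> real) \<Rightarrow> (real^3 \<Rightarrow> real) \<Rightarrow> real^3 \<Rightarrow> real \<Rightarrow> real \<Rightarrow> real"
  proof (rule set_lebesgue_integral_cong[OF TDm], intro allI impI)
    fix z :: "(real^3) \<times> (real^3)" assume z: "z \<in> torus_dom"
    then have x: "fst z \<in> C" unfolding TD by auto
    have e1: "(\<lambda>v. f1 (fst z, v)) = (\<lambda>v. g1 (fst z, v))" using x by (auto simp: g1_def TD)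
    have e2: "(\<lambda>v. f2 (fst z, v)) = (\<lambda>v. g2 (fst z, v))" using x by (auto simp: g2_def TD)
    have e3: "f1 z = g1 z" "f2 z = g2 z" using z by (simp_all add: g1_def g2_def)
    show "\<Phi> (\<lambda>v. f1 (fst z, v)) (\<lambda>v. f2 (fst z, v)) (snd z) (f1 z) (f2 z)
        = \<Phi> (\<lambda>v. g1 (fst z, v)) (\<lambda>v. g2 (fst z, v)) (snd z) (g1 z) (g2 z)"
      unfolding e1 e2 e3 ..
  qed
  note c1 = cong[of "\<lambda>s1 s2 v y1 y2. fst (Lop m1 m2 n10 n20 \<delta> \<omega> s1 s2) v * y1 + snd (Lop m1 m2 n10 n20 \<delta> \<omega> s1 s2) v * y2"]
  note c2 = cong[of "\<lambda>s1 s2 v y1 y2. (y1 - Pk m1 n10 s1 v)\<^sup>2 + (y2 - Pk m2 n20 s2 v)\<^sup>2"]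
  note c3 = cong[of "\<lambda>s1 s2 v y1 y2. (y1 - fst (Pbig m1 m2 n10 n20 (s1, s2)) v)\<^sup>2 + (y2 - snd (Pbig m1 m2 n10 n20 (s1, s2)) v)\<^sup>2"]
  show ?thesis
    unfolding c1 c2 c3 by (rule main_g[OF assms(1-8) g1m g1i g2m g2i])
qed

end
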